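(* For any $\varepsilon,\delta\in(0,1)$ there is an $(\varepsilon,\delta)$-DP event-level continual mechanism in the exact setting that maintains the degree histogram on incremental edge streams of length $T$ over $n$-vertex graphs with additive error $\tilde O(\sqrt{n\log(1/\delta)}/\varepsilon)$ in $\ell_\infty$, i.e. with probability at least $2/3$, simultaneously for all time steps $t$ and all degrees $i$, the output estimate of $d_i(G^t)$ is within $\tilde O(\sqrt{n\log(1/\delta)}/\varepsilon)$ of $d_i(G^t)$.
   Context: Incremental edge streams: each update inserts an edge of a fixed $n$-vertex vertex set or is the empty element $\bot$; $G^t$ is the graph of edges inserted up to time $t$. The degree histogram is $(d_0,\dots,d_{n-1})$ with $d_i$ the number of vertices of degree $i$. A continual mechanism outputs after each update a value depending only on updates so far. Event-level neighboring streams differ in at most one time step; $(\varepsilon,\delta)$-DP means $\Pr[\mathcal A(u)\in S]\le e^\varepsilon\Pr[\mathcal A(v)\in S]+\delta$ for neighbors $u,v$ and all output sets $S$. $\tilde O$ hides polylogarithmic factors in $n$ and $T$. *)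

theory Defs
  imports "HOL-Probability.Probability"
begin

text \<open>Vertex set: {0..<n}. An edge is a two-element set {a,b} of vertices.
  An update is either Some e (insertion of edge e) or None (the empty element).\<close>

type_synonym update = "nat set option"

definition is_edge :: "nat \<Rightarrow> nat set \<Rightarrow> bool" where
  "is_edge n e \<longleftrightarrow> (\<exists>a b. a < n \<and> b < n \<and> a \<noteq> b \<and> e = {a, b})"

definition valid_update :: "nat \<Rightarrow> update \<Rightarrow> bool" where
  "valid_update n u \<longleftrightarrow> (case u of None \<Rightarrow> True | Some e \<Rightarrow> is_edge n e)"

definition valid_stream :: "nat \<Rightarrow> nat \<Rightarrow> update list \<Rightarrow> bool" where
  "valid_stream n T xs \<longleftrightarrow> length xs = T \<and> (\<forall>u\<in>set xs. valid_update n u)"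

definition graph_at :: "update list \<Rightarrow> nat \<Rightarrow> nat set set" where
  "graph_at xs t = {e. Some e \<in> set (take t xs)}"

definition degree :: "nat set set \<Rightarrow> nat \<Rightarrow> nat" where
  "degree G v = card {e \<in> G. v \<in> e}"

definition deg_hist :: "nat \<Rightarrow> nat set set \<Rightarrow> nat \<Rightarrow> nat" where
  "deg_hist n G i = card {v. v < n \<and> degree G v = i}"

definition neighboring :: "update list \<Rightarrow> update list \<Rightarrow> bool" where
  "neighboring xs ys \<longleftrightarrow> length xs = length ys \<and>
     (\<exists>k. \<forall>j < length xs. j \<noteq> k \<longrightarrow> xs ! j = ys ! j)"

text \<open>A continual mechanism is modelled by a source of internal randomness r drawn
  from a probability space R (on sequences of reals) and a map A such that the output
  after time step t is A r (take t xs): it depends only on the randomness and on the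
  updates so far.  Outputs are real vectors indexed by degree i.\<close>
definition mech_output ::
  "((nat \<Rightarrow> real) \<Rightarrow> update list \<Rightarrow> nat \<Rightarrow> real) \<Rightarrow> (nat \<Rightarrow> real) \<Rightarrow> update list \<Rightarrow> nat \<Rightarrow> nat \<Rightarrow> real" where
  "mech_output A r xs = (\<lambda>t. A r (take t xs))"

definition continual_mechanism ::
  "nat \<Rightarrow> nat \<Rightarrow> (nat \<Rightarrow> real) measure \<Rightarrow> ((nat \<Rightarrow> real) \<Rightarrow> update list \<Rightarrow> nat \<Rightarrow> real) \<Rightarrow> bool" where
  "continual_mechanism n T R A \<longleftrightarrow> prob_space R \<and>
     (\<forall>xs. valid_stream n T xs \<longrightarrow> (\<lambda>r. mech_output A r xs) \<in> R \<rightarrow>\<^sub>M borel)"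

definition event_level_DP ::
  "nat \<Rightarrow> nat \<Rightarrow> real \<Rightarrow> real \<Rightarrow> (nat \<Rightarrow> real) measure \<Rightarrow> ((nat \<Rightarrow> real) \<Rightarrow> update list \<Rightarrow> nat \<Rightarrow> real) \<Rightarrow> bool" where
  "event_level_DP n T \<epsilon> \<delta> R A \<longleftrightarrow>
     (\<forall>xs ys S. valid_stream n T xs \<longrightarrow> valid_stream n T ys \<longrightarrow> neighboring xs ys \<longrightarrow>
        S \<in> sets (borel :: (nat \<Rightarrow> nat \<Rightarrow> real) measure) \<longrightarrow>
        measure R {r \<in> space R. mech_output A r xs \<in> S}
          \<le> exp \<epsilon> * measure R {r \<in> space R. mech_output A r ys \<in> S} + \<delta>)"

definition accurate ::
  "nat \<Rightarrow> nat \<Rightarrow> (nat \<Rightarrow> real) measure \<Rightarrow> ((nat \<Rightarrow> real) \<Rightarrow> update list \<Rightarrow> nat \<Rightarrow> real) \<Rightarrow> real \<Rightarrow> bool" where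
  "accurate n T R A \<alpha> \<longleftrightarrow>
     (\<forall>xs. valid_stream n T xs \<longrightarrow>
        measure R {r \<in> space R. \<forall>t\<in>{1..T}. \<forall>i<n.
            \<bar>A r (take t xs) i - real (deg_hist n (graph_at xs t) i)\<bar> \<le> \<alpha>} \<ge> 2/3)"

end

theory Submission
  imports Defs
begin

fun updE :: "update \<Rightarrow> nat set" where
  "updE None = {}"
| "updE (Some e) = e"

definition dg :: "update list \<Rightarrow> nat \<Rightarrow> nat \<Rightarrow> nat" where
  "dg xs v t = degree (graph_at xs t) v"

lemma finite_graph_at: "finite (graph_at xs t)"
proof -
  have "graph_at xs t = Some -` set (take t xs)" by (simp add: graph_at_def vimage_def)
  then show ?thesis by (simp add: finite_vimageI)
qed

lemma graph_at_mono: "s \<le> t \<Longrightarrow> graph_at xs s \<subseteq> graph_at xs t"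
proof -
  assume st: "s \<le> t"
  have "set (take s xs) \<subseteq> set (take t xs)" by (rule set_take_subset_set_take[OF st])
  then show ?thesis unfolding graph_at_def by blast
qed

lemma dg_mono: "s \<le> t \<Longrightarrow> dg xs v s \<le> dg xs v t"
proof -
  assume st: "s \<le> t"
  have "{e \<in> graph_at xs s. v \<in> e} \<subseteq> {e \<in> graph_at xs t. v \<in> e}"
    using graph_at_mono[OF st, of xs] by blast
  moreover have "finite {e \<in> graph_at xs t. v \<in> e}" using finite_graph_at[of xs t] by simp
  ultimately show ?thesis unfolding dg_def degree_def by (rule card_mono[rotated])
qed

lemma graph_at_valid:
  assumes "valid_stream n T xs" "e \<in> graph_at xs t"
  shows "is_edge n e"
proof -
  have "Some e \<in> set xs" using assms(2) unfolding graph_at_def using in_set_takeD by fastforce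
  then show ?thesis using assms(1) by (force simp: valid_stream_def valid_update_def)
qed

lemma dg_le:
  assumes "valid_stream n T xs"
  shows "dg xs v t \<le> n"
proof -
  have "{e \<in> graph_at xs t. v \<in> e} \<subseteq> (\<lambda>u. {v, u}) ` {..<n}"
  proof
    fix e assume e: "e \<in> {e \<in> graph_at xs t. v \<in> e}"
    then have "is_edge n e" using graph_at_valid[OF assms] by blast
    then obtain a b where ab: "a < n" "b < n" "a \<noteq> b" "e = {a, b}"
      unfolding is_edge_def by blast
    show "e \<in> (\<lambda>u. {v, u}) ` {..<n}"
    proof (cases "v = a")
      case True then show ?thesis using ab by auto
    next
      case False then have "v = b" using e ab by auto
      then show ?thesis using ab by (auto simp: image_iff intro!: bexI[of _ a])
    qed
  qed
  then have "card {e \<in> graph_at xs t. v \<in> e} \<le> card ((\<lambda>u. {v, u}) ` {..<n})"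
    by (intro card_mono) auto
  also have "\<dots> \<le> n" using card_image_le[of "{..<n}" "\<lambda>u. {v, u}"] by simp
  finally show ?thesis by (simp add: dg_def degree_def)
qed

lemma deg_hist_sum: "int (deg_hist n G i) = (\<Sum>v<n. if degree G v = i then 1 else 0)"
proof -
  have "deg_hist n G i = card {v \<in> {..<n}. degree G v = i}"
    by (simp add: deg_hist_def)
  also have "int \<dots> = (\<Sum>v\<in>{v \<in> {..<n}. degree G v = i}. 1)" by simp
  also have "\<dots> = (\<Sum>v<n. if degree G v = i then 1 else 0)"
    by (subst sum.inter_filter) auto
  finally show ?thesis .
qed

lemma same_inc:
  assumes len: "length xs = length ys" and eq: "\<forall>j < length xs. j \<noteq> k \<longrightarrow> xs ! j = ys ! j"
    and v: "v \<notin> (if k < length xs then updE (xs ! k) \<union> updE (ys ! k) else {})"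
  shows "{e \<in> graph_at xs t. v \<in> e} = {e \<in> graph_at ys t. v \<in> e}"
proof -
  have key: "Some e \<in> set (take t ys)" if "Some e \<in> set (take t xs)" "v \<in> e"
    and len: "length xs = length ys" and eq: "\<forall>j < length xs. j \<noteq> k \<longrightarrow> xs ! j = ys ! j"
    and v: "v \<notin> (if k < length xs then updE (xs ! k) \<union> updE (ys ! k) else {})"
    for xs ys :: "update list" and e
  proof -
    from that(1) obtain j where j: "j < length (take t xs)" "take t xs ! j = Some e"
      by (auto simp: in_set_conv_nth)
    have jk: "j \<noteq> k"
    proof
      assume "j = k"
      then have "k < length xs" "xs ! k = Some e" using j by auto
      then show False using v that(2) by (auto simp: updE.simps)
    qed
    have jx: "j < length xs" "j < t" using j by auto
    have "ys ! j = Some e" using eq jx jk j by auto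
    moreover have "j < length (take t ys)" using jx len by simp
    ultimately have "take t ys ! j = Some e" using jx by simp
    then show ?thesis using \<open>j < length (take t ys)\<close> by (metis nth_mem)
  qed
  have eq': "\<forall>j < length ys. j \<noteq> k \<longrightarrow> ys ! j = xs ! j" using eq len by auto
  have v': "v \<notin> (if k < length ys then updE (ys ! k) \<union> updE (xs ! k) else {})" using v len by auto
  show ?thesis
  proof (intro set_eqI iffI)
    fix e assume "e \<in> {e \<in> graph_at xs t. v \<in> e}"
    then have "Some e \<in> set (take t xs)" "v \<in> e" by (auto simp: graph_at_def)
    then have "Some e \<in> set (take t ys)" by (rule key[OF _ _ len eq v])
    then show "e \<in> {e \<in> graph_at ys t. v \<in> e}" using \<open>v \<in> e\<close> by (simp add: graph_at_def)
  next
    fix e assume "e \<in> {e \<in> graph_at ys t. v \<in> e}"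
    then have "Some e \<in> set (take t ys)" "v \<in> e" by (auto simp: graph_at_def)
    then have "Some e \<in> set (take t xs)" by (rule key[OF _ _ len[symmetric] eq' v'])
    then show "e \<in> {e \<in> graph_at xs t. v \<in> e}" using \<open>v \<in> e\<close> by (simp add: graph_at_def)
  qed
qed

lemma card_aff:
  assumes "valid_stream n T xs" "valid_stream n T ys"
  shows "card (if k < length xs then updE (xs ! k) \<union> updE (ys ! k) else {}) \<le> 4"
proof (cases "k < length xs")
  case True
  have c2: "card (updE (zs ! k)) \<le> 2 \<and> finite (updE (zs ! k))" if "valid_stream n T zs" "k < length zs" for zs
  proof -
    have "valid_update n (zs ! k)" using that by (auto simp: valid_stream_def)
    then show ?thesis
      by (cases "zs ! k") (auto simp: updE.simps valid_update_def is_edge_def card_insert_if)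
  qed
  have l: "length ys = length xs" using assms by (simp add: valid_stream_def)
  have "card (updE (xs ! k) \<union> updE (ys ! k)) \<le> card (updE (xs ! k)) + card (updE (ys ! k))"
    by (rule card_Un_le)
  then show ?thesis using True c2[OF assms(1)] c2[OF assms(2)] l by auto
qed simp

lemma finite_aff:
  assumes "valid_stream n T xs" "valid_stream n T ys"
  shows "finite (if k < length xs then updE (xs ! k) \<union> updE (ys ! k) else {})"
proof (cases "k < length xs")
  case True
  have c2: "finite (updE (zs ! k))" if "valid_stream n T zs" "k < length zs" for zs
  proof -
    have "valid_update n (zs ! k)" using that by (auto simp: valid_stream_def)
    then show ?thesis
      by (cases "zs ! k") (auto simp: updE.simps valid_update_def is_edge_def)
  qed
  have l: "length ys = length xs" using assms by (simp add: valid_stream_def)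
  then show ?thesis using True c2[OF assms(1)] c2[OF assms(2)] by auto
qed simp

lemma exp_neg_aux:
  fixes x :: real assumes "\<bar>x\<bar> \<le> 1" shows "x \<le> 1 - exp (-x) + x^2"
proof (cases "x \<le> 0")
  case True
  then show ?thesis using assms by (smt (verit) exp_bound power2_minus)
next
  case False
  have e: "exp x \<ge> 1 + x" by (rule exp_ge_add_one_self)
  have "exp (-x) = 1 / exp x" by (simp add: exp_minus field_simps)
  also have "\<dots> \<le> 1 / (1 + x)" using e False by (intro divide_left_mono) auto
  also have "\<dots> \<le> 1 - x + x^2"
  proof -
    have "(1 + x) * (1 - x + x^2) = 1 + x^3" by (simp add: algebra_simps power2_eq_square power3_eq_cube)
    also have "\<dots> \<ge> 1" using False by simp
    finally show ?thesis using False by (simp add: divide_simps mult.commute)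
  qed
  finally show ?thesis by simp
qed

definition Kc :: "real \<Rightarrow> nat \<Rightarrow> real" where
  "Kc c N = (\<Sum>y\<in>{-int N..int N}. exp (-c * \<bar>real_of_int y\<bar>))"

definition gw :: "real \<Rightarrow> nat \<Rightarrow> int \<Rightarrow> real" where
  "gw c N z = (if \<bar>z\<bar> \<le> int N then exp (-c * \<bar>real_of_int z\<bar>) / Kc c N else 0)"

definition tlap :: "real \<Rightarrow> nat \<Rightarrow> int pmf" where
  "tlap c N = embed_pmf (gw c N)"

lemma Kc_ge1: "Kc c N \<ge> 1"
proof -
  have "Kc c N \<ge> (\<Sum>y\<in>{0::int}. exp (-c * \<bar>real_of_int y\<bar>))"
    unfolding Kc_def by (intro sum_mono2) auto
  then show ?thesis by simp
qed

lemma gw_nonneg: "gw c N z \<ge> 0"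
  using Kc_ge1[of c N] by (simp add: gw_def)

lemma sum_gw: "(\<Sum>z\<in>{-int N..int N}. gw c N z) = 1"
proof -
  have "(\<Sum>z\<in>{-int N..int N}. gw c N z) = (\<Sum>z\<in>{-int N..int N}. exp (-c * \<bar>real_of_int z\<bar>) / Kc c N)"
    by (intro sum.cong) (auto simp: gw_def)
  also have "\<dots> = (\<Sum>z\<in>{-int N..int N}. exp (-c * \<bar>real_of_int z\<bar>)) / Kc c N"
    by (simp add: sum_divide_distrib)
  also have "\<dots> = 1" using Kc_ge1[of c N] unfolding Kc_def[symmetric] by simp
  finally show ?thesis .
qed

lemma pmf_tlap: "pmf (tlap c N) z = gw c N z"
  unfolding tlap_def
proof (rule pmf_embed_pmf)
  show "\<And>x. 0 \<le> gw c N x" by (rule gw_nonneg)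
  have "(\<integral>\<^sup>+ x. ennreal (gw c N x) \<partial>count_space UNIV) = (\<Sum>x\<in>{-int N..int N}. ennreal (gw c N x))"
    by (rule nn_integral_count_space') (auto simp: gw_def)
  also have "\<dots> = ennreal (\<Sum>x\<in>{-int N..int N}. gw c N x)"
    by (rule sum_ennreal) (rule gw_nonneg)
  also have "\<dots> = 1" by (simp add: sum_gw)
  finally show "(\<integral>\<^sup>+ x. ennreal (gw c N x) \<partial>count_space UNIV) = 1" .
qed

lemma set_tlap: "set_pmf (tlap c N) \<subseteq> {-int N..int N}"
  by (auto simp: set_pmf_eq pmf_tlap gw_def)

lemma measure_tlap: "measure (tlap c N) A = (\<Sum>z\<in>A \<inter> {-int N..int N}. gw c N z)"
proof -
  have "measure (tlap c N) A = measure (tlap c N) (A \<inter> {-int N..int N})"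
  proof -
    have "A \<inter> {-int N..int N} \<inter> set_pmf (tlap c N) = A \<inter> set_pmf (tlap c N)"
      using set_tlap[of c N] by blast
    then show ?thesis using measure_Int_set_pmf[of "tlap c N"] by metis
  qed
  also have "\<dots> = (\<Sum>z\<in>A \<inter> {-int N..int N}. gw c N z)"
    by (subst measure_measure_pmf_finite) (auto simp: pmf_tlap)
  finally show ?thesis .
qed

lemma shift_sum_le:
  assumes "inj_on h A" "h ` A \<subseteq> {-int N..int N}"
  shows "(\<Sum>z\<in>A. exp (-c * \<bar>real_of_int (h z)\<bar>)) \<le> Kc c N"
proof -
  have "(\<Sum>z\<in>A. exp (-c * \<bar>real_of_int (h z)\<bar>)) = (\<Sum>y\<in>h ` A. exp (-c * \<bar>real_of_int y\<bar>))"
    using assms(1) by (simp add: sum.reindex)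
  also have "\<dots> \<le> Kc c N" unfolding Kc_def
    by (intro sum_mono2 assms(2)) auto
  finally show ?thesis .
qed

lemma tail_half:
  assumes "c \<ge> 0"
  shows "(\<Sum>z\<in>{int k..int N}. gw c N z) \<le> exp (-c * k)"
proof -
  have "(\<Sum>z\<in>{int k..int N}. gw c N z) = (\<Sum>z\<in>{int k..int N}. exp (-c * k) * exp (-c * \<bar>real_of_int (z - int k)\<bar>) / Kc c N)"
  proof (intro sum.cong refl)
    fix z assume z: "z \<in> {int k..int N}"
    then have "\<bar>real_of_int z\<bar> = real k + \<bar>real_of_int (z - int k)\<bar>" by auto
    then have "exp (-c * \<bar>real_of_int z\<bar>) = exp (-c * k) * exp (-c * \<bar>real_of_int (z - int k)\<bar>)"
      by (simp add: algebra_simps flip: exp_add)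
    then show "gw c N z = exp (-c * k) * exp (-c * \<bar>real_of_int (z - int k)\<bar>) / Kc c N"
      using z by (simp add: gw_def)
  qed
  also have "\<dots> = exp (-c * k) * (\<Sum>z\<in>{int k..int N}. exp (-c * \<bar>real_of_int (z - int k)\<bar>)) / Kc c N"
    by (simp add: sum_distrib_left sum_divide_distrib)
  also have "\<dots> \<le> exp (-c * k) * Kc c N / Kc c N"
    using Kc_ge1[of c N]
    by (intro divide_right_mono mult_left_mono shift_sum_le) (auto simp: inj_on_def)
  also have "\<dots> = exp (-c * k)" using Kc_ge1[of c N] by simp
  finally show ?thesis .
qed

lemma tail_half':
  assumes "c \<ge> 0"
  shows "(\<Sum>z\<in>{-int N..-int k}. gw c N z) \<le> exp (-c * k)"
proof -
  have "(\<Sum>z\<in>{-int N..-int k}. gw c N z) = (\<Sum>z\<in>uminus ` {int k..int N}. gw c N z)"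
    by (intro sum.cong refl) (auto simp: image_iff intro!: bexI[of _ "- x" for x])
  also have "\<dots> = (\<Sum>z\<in>{int k..int N}. gw c N (- z))"
    by (subst sum.reindex) (auto simp: inj_on_def)
  also have "\<dots> = (\<Sum>z\<in>{int k..int N}. gw c N z)"
    by (intro sum.cong refl) (simp add: gw_def)
  also have "\<dots> \<le> exp (-c * k)" by (rule tail_half[OF assms])
  finally show ?thesis .
qed

lemma tail_tlap:
  assumes "c \<ge> 0"
  shows "measure (tlap c N) {z. \<bar>z\<bar> \<ge> int k} \<le> 2 * exp (-c * k)"
proof -
  have sub: "{z. \<bar>z\<bar> \<ge> int k} \<inter> {-int N..int N} \<subseteq> {int k..int N} \<union> {-int N..-int k}" by auto
  have "measure (tlap c N) {z. \<bar>z\<bar> \<ge> int k} = (\<Sum>z\<in>{z. \<bar>z\<bar> \<ge> int k} \<inter> {-int N..int N}. gw c N z)"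
    by (rule measure_tlap)
  also have "\<dots> \<le> (\<Sum>z\<in>{int k..int N} \<union> {-int N..-int k}. gw c N z)"
    by (intro sum_mono2 sub) (auto simp: gw_nonneg)
  also have "\<dots> \<le> (\<Sum>z\<in>{int k..int N}. gw c N z) + (\<Sum>z\<in>{-int N..-int k}. gw c N z)"
    by (subst sum_Un) (auto intro!: sum_nonneg simp: gw_nonneg)
  also have "\<dots> \<le> 2 * exp (-c * k)" using tail_half[OF assms, of N k] tail_half'[OF assms, of N k] by linarith
  finally show ?thesis .
qed

lemma tail_tlap_real:
  assumes "c \<ge> 0" "a \<ge> 0"
  shows "measure (tlap c N) {z. real_of_int \<bar>z\<bar> > a} \<le> 2 * exp (-c * a)"
proof -
  define k where "k = nat (floor a) + 1"
  have "{z. real_of_int \<bar>z\<bar> > a} \<subseteq> {z. \<bar>z\<bar> \<ge> int k}"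
    using assms by (auto simp: k_def) linarith
  then have "measure (tlap c N) {z. real_of_int \<bar>z\<bar> > a} \<le> measure (tlap c N) {z. \<bar>z\<bar> \<ge> int k}"
    by (intro measure_pmf.finite_measure_mono) auto
  also have "\<dots> \<le> 2 * exp (-c * k)" by (rule tail_tlap[OF assms(1)])
  also have "\<dots> \<le> 2 * exp (-c * a)"
  proof -
    have "a \<le> real k" using assms real_of_int_floor_add_one_gt[of a] by (simp add: k_def) linarith
    then have "c * a \<le> c * real k" using assms by (intro mult_left_mono) auto
    then show ?thesis by simp
  qed
  finally show ?thesis .
qed

lemma exp_loss:
  assumes c: "c \<ge> 0" and cw: "c * \<bar>real_of_int w\<bar> \<le> 1" and wN: "nat \<bar>w\<bar> \<le> N"
  shows "measure_pmf.expectation (tlap c N) (\<lambda>z. c * (\<bar>real_of_int (z + w)\<bar> - \<bar>real_of_int z\<bar>))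
          \<le> 2 * exp (-c * real (N - nat \<bar>w\<bar> + 1)) + c^2 * (real_of_int w)^2"
proof -
  define S where "S = {-int N..int N}"
  define X where "X = (\<lambda>z::int. c * (\<bar>real_of_int (z + w)\<bar> - \<bar>real_of_int z\<bar>))"
  define Tl where "Tl = {z::int. \<bar>z\<bar> \<ge> int (N - nat \<bar>w\<bar> + 1)}"
  have fS: "finite S" by (simp add: S_def)
  have E: "measure_pmf.expectation (tlap c N) X = (\<Sum>z\<in>S. gw c N z * X z)"
    by (subst integral_measure_pmf_real[OF fS]) (auto simp: S_def pmf_tlap mult.commute dest: subsetD[OF set_tlap])
  have Xabs: "\<bar>X z\<bar> \<le> c * \<bar>real_of_int w\<bar>" for z
  proof -
    have "\<bar>\<bar>real_of_int (z + w)\<bar> - \<bar>real_of_int z\<bar>\<bar> \<le> \<bar>real_of_int w\<bar>" by simp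
    then show ?thesis using c by (simp add: X_def abs_mult mult_left_mono)
  qed
  have Xsq: "(X z)^2 \<le> c^2 * (real_of_int w)^2" for z
  proof -
    have "(X z)^2 = \<bar>X z\<bar>^2" by simp
    also have "\<dots> \<le> (c * \<bar>real_of_int w\<bar>)^2" by (intro power_mono Xabs) auto
    finally show ?thesis by (simp add: power_mult_distrib)
  qed
  have pt: "X z \<le> 1 - exp (- X z) + c^2 * (real_of_int w)^2" for z
    using exp_neg_aux[of "X z"] Xabs[of z] cw Xsq[of z] by linarith
  have ge: "gw c N z * exp (- X z) \<ge> gw c N (z + w)" if "z \<in> S" for z
  proof -
    have "gw c N z * exp (- X z) = exp (-c * \<bar>real_of_int (z + w)\<bar>) / Kc c N"
      using that by (simp add: gw_def S_def X_def abs_le_iff flip: exp_add) (simp add: algebra_simps)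
    also have "\<dots> \<ge> gw c N (z + w)" using Kc_ge1[of c N] by (simp add: gw_def)
    finally show ?thesis .
  qed
  have "(\<Sum>z\<in>S. gw c N z * X z) \<le> (\<Sum>z\<in>S. gw c N z * (1 + c^2 * (real_of_int w)^2) - gw c N z * exp (- X z))"
  proof (intro sum_mono)
    fix z
    have "gw c N z * X z \<le> gw c N z * (1 - exp (- X z) + c^2 * (real_of_int w)^2)"
      by (intro mult_left_mono pt gw_nonneg)
    then show "gw c N z * X z \<le> gw c N z * (1 + c^2 * (real_of_int w)^2) - gw c N z * exp (- X z)"
      by (simp add: algebra_simps)
  qed
  also have "\<dots> = (1 + c^2 * (real_of_int w)^2) - (\<Sum>z\<in>S. gw c N z * exp (- X z))"
    by (simp add: sum_subtractf flip: sum_distrib_right) (simp add: S_def sum_gw)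
  finally have up: "(\<Sum>z\<in>S. gw c N z * X z) \<le> (1 + c^2 * (real_of_int w)^2) - (\<Sum>z\<in>S. gw c N z * exp (- X z))" .
  have "(\<Sum>y\<in>S - S \<inter> Tl. gw c N y) \<le> (\<Sum>y\<in>(\<lambda>z. z + w) ` S. gw c N y)"
    by (intro sum_mono2) (use wN in \<open>auto simp: S_def Tl_def gw_nonneg image_iff intro!: bexI[of _ "x - w" for x]\<close>)
  also have "(\<Sum>y\<in>(\<lambda>z. z + w) ` S. gw c N y) = (\<Sum>z\<in>S. gw c N (z + w))"
    by (subst sum.reindex) (auto simp: inj_on_def)
  also have "\<dots> \<le> (\<Sum>z\<in>S. gw c N z * exp (- X z))"
    by (intro sum_mono ge)
  finally have low1: "(\<Sum>y\<in>S - S \<inter> Tl. gw c N y) \<le> (\<Sum>z\<in>S. gw c N z * exp (- X z))" .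
  have "(\<Sum>y\<in>S - S \<inter> Tl. gw c N y) = 1 - (\<Sum>y\<in>Tl \<inter> S. gw c N y)"
    by (subst sum_diff) (auto simp: fS S_def sum_gw Int_commute)
  also have "(\<Sum>y\<in>Tl \<inter> S. gw c N y) = measure (tlap c N) Tl"
    by (simp add: measure_tlap S_def)
  finally have low2: "(\<Sum>y\<in>S - S \<inter> Tl. gw c N y) = 1 - measure (tlap c N) Tl" .
  have "measure (tlap c N) Tl \<le> 2 * exp (-c * real (N - nat \<bar>w\<bar> + 1))"
    unfolding Tl_def by (rule tail_tlap[OF c])
  then have "(\<Sum>z\<in>S. gw c N z * X z) \<le> 2 * exp (-c * real (N - nat \<bar>w\<bar> + 1)) + c^2 * (real_of_int w)^2"
    using up low1 low2 by linarith
  then show ?thesis using E by (simp add: X_def)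
qed

lemma marginal_prob:
  assumes "finite U" "j \<in> U"
  shows "measure (Pi_pmf U 0 (\<lambda>_. tlap c N)) {f. P (f j)} = measure (tlap c N) {z. P z}"
proof -
  have "measure (Pi_pmf U 0 (\<lambda>_. tlap c N)) {f. P (f j)} =
        measure (map_pmf (\<lambda>f. f j) (Pi_pmf U 0 (\<lambda>_. tlap c N))) {z. P z}"
    by simp
  also have "map_pmf (\<lambda>f. f j) (Pi_pmf U 0 (\<lambda>_. tlap c N)) = tlap c N"
    using assms by (simp add: Pi_pmf_component)
  finally show ?thesis .
qed

lemma marginal_exp:
  fixes h :: "int \<Rightarrow> real"
  assumes "finite U" "j \<in> U"
  shows "measure_pmf.expectation (Pi_pmf U 0 (\<lambda>_. tlap c N)) (\<lambda>f. h (f j)) = measure_pmf.expectation (tlap c N) h"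
proof -
  have "measure_pmf.expectation (Pi_pmf U 0 (\<lambda>_. tlap c N)) (\<lambda>f. h (f j)) =
        measure_pmf.expectation (map_pmf (\<lambda>f. f j) (Pi_pmf U 0 (\<lambda>_. tlap c N))) h"
    by (rule integral_map_pmf[symmetric])
  also have "map_pmf (\<lambda>f. f j) (Pi_pmf U 0 (\<lambda>_. tlap c N)) = tlap c N"
    using assms by (simp add: Pi_pmf_component)
  finally show ?thesis .
qed

lemma core_dp:
  fixes U :: "'a set" and w :: "'a \<Rightarrow> int" and E :: "('a \<Rightarrow> int) set"
  assumes fin: "finite U" and wout: "\<And>j. j \<notin> U \<Longrightarrow> w j = 0"
    and c: "c > 0" and cw: "\<And>j. c * \<bar>real_of_int (w j)\<bar> \<le> 1"
    and wB: "\<And>j. nat \<bar>w j\<bar> \<le> B" and BN: "B \<le> N"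
    and Q: "(\<Sum>j\<in>U. (real_of_int (w j))^2) \<le> Qb"
    and e1: "c^2 * Qb \<le> \<epsilon>/4"
    and e2: "8 * c^2 * Qb * ln (2/\<delta>) \<le> \<epsilon>^2"
    and tl: "real (card U) * (2 * exp (-c * real (N - B + 1))) \<le> min (\<delta>/2) (\<epsilon>/4)"
    and \<delta>: "0 < \<delta>" "\<delta> \<le> 1" and \<epsilon>: "0 < \<epsilon>"
  shows "measure (Pi_pmf U 0 (\<lambda>_. tlap c N)) {f. (\<lambda>j. f j + w j) \<in> E}
           \<le> exp \<epsilon> * measure (Pi_pmf U 0 (\<lambda>_. tlap c N)) E + \<delta>"
proof -
  define P where "P = Pi_pmf U 0 (\<lambda>_. tlap c N)"
  define sh where "sh = (\<lambda>f::'a \<Rightarrow> int. (\<lambda>j. f j + w j))"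
  define Lz where "Lz = (\<lambda>f::'a \<Rightarrow> int. \<Sum>j\<in>U. c * (\<bar>real_of_int (f j + w j)\<bar> - \<bar>real_of_int (f j)\<bar>))"
  define Good where "Good = {f. (\<forall>j\<in>U. \<bar>f j + w j\<bar> \<le> int N) \<and> Lz f \<le> \<epsilon>}"
  define Fs where "Fs = PiE_dflt U (0::int) (\<lambda>_. {-int N..int N})"
  have fFs: "finite Fs" unfolding Fs_def by (intro finite_PiE_dflt fin) auto
  have suppP: "set_pmf P \<subseteq> Fs"
  proof
    fix f assume "f \<in> set_pmf P"
    then have "f \<in> PiE_dflt U 0 (set_pmf \<circ> (\<lambda>_. tlap c N))"
      using set_Pi_pmf_subset'[OF fin, of 0 "\<lambda>_. tlap c N"] by (auto simp: P_def)
    then show "f \<in> Fs" using set_tlap[of c N] unfolding Fs_def PiE_dflt_def by auto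
  qed
  have measP: "measure P A = (\<Sum>f\<in>A \<inter> Fs. pmf P f)" for A
  proof -
    have "measure P A = measure P (A \<inter> Fs)"
    proof -
      have "A \<inter> Fs \<inter> set_pmf P = A \<inter> set_pmf P" using suppP by blast
      then show ?thesis using measure_Int_set_pmf[of P] by metis
    qed
    also have "\<dots> = (\<Sum>f\<in>A \<inter> Fs. pmf P f)"
      by (rule measure_measure_pmf_finite) (use fFs in auto)
    finally show ?thesis .
  qed
  have pmfP: "pmf P f = (if (\<forall>x. x \<notin> U \<longrightarrow> f x = 0) then \<Prod>x\<in>U. gw c N (f x) else 0)" for f
    unfolding P_def by (auto simp: pmf_Pi[OF fin] pmf_tlap)
  have ratio: "pmf P f \<le> exp \<epsilon> * pmf P (sh f)" if f: "f \<in> Fs" "f \<in> Good" for f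
  proof -
    have fout: "\<And>x. x \<notin> U \<Longrightarrow> f x = 0" and fin_r: "\<And>x. x \<in> U \<Longrightarrow> \<bar>f x\<bar> \<le> int N"
      using f(1) by (auto simp: Fs_def PiE_dflt_def)
    have shout: "\<And>x. x \<notin> U \<Longrightarrow> sh f x = 0" using fout wout by (simp add: sh_def)
    have gj: "gw c N (f j) = gw c N (f j + w j) * exp (c * (\<bar>real_of_int (f j + w j)\<bar> - \<bar>real_of_int (f j)\<bar>))"
      if j: "j \<in> U" for j
    proof -
      have "\<bar>f j + w j\<bar> \<le> int N" using f(2) j by (auto simp: Good_def)
      then show ?thesis using fin_r[OF j]
        by (simp add: gw_def flip: exp_add) (simp add: algebra_simps)
    qed
    have "pmf P f = (\<Prod>j\<in>U. gw c N (f j))" using fout by (simp add: pmfP)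
    also have "\<dots> = (\<Prod>j\<in>U. gw c N (f j + w j) * exp (c * (\<bar>real_of_int (f j + w j)\<bar> - \<bar>real_of_int (f j)\<bar>)))"
      by (intro prod.cong refl gj)
    also have "\<dots> = (\<Prod>j\<in>U. gw c N (f j + w j)) * exp (Lz f)"
      by (simp add: prod.distrib Lz_def exp_sum[OF fin])
    also have "(\<Prod>j\<in>U. gw c N (f j + w j)) = pmf P (sh f)"
      using shout by (simp add: pmfP sh_def)
    also have "pmf P (sh f) * exp (Lz f) \<le> pmf P (sh f) * exp \<epsilon>"
      using f(2) by (intro mult_left_mono) (auto simp: Good_def)
    finally show ?thesis by (simp add: mult.commute)
  qed
  have stepB: "measure P ({f. sh f \<in> E} \<inter> Good) \<le> exp \<epsilon> * measure P E"
  proof -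
    define X where "X = {f. sh f \<in> E} \<inter> Good \<inter> Fs"
    have fX: "finite X" using fFs by (simp add: X_def)
    have injsh: "inj_on sh X" by (auto simp: inj_on_def sh_def fun_eq_iff)
    have "measure P ({f. sh f \<in> E} \<inter> Good) = (\<Sum>f\<in>X. pmf P f)"
      by (simp add: measP X_def Int_assoc)
    also have "\<dots> \<le> (\<Sum>f\<in>X. exp \<epsilon> * pmf P (sh f))"
      by (intro sum_mono ratio) (auto simp: X_def)
    also have "\<dots> = exp \<epsilon> * (\<Sum>g\<in>sh ` X. pmf P g)"
      by (simp add: sum_distrib_left sum.reindex[OF injsh])
    also have "(\<Sum>g\<in>sh ` X. pmf P g) = measure P (sh ` X)"
      by (rule measure_measure_pmf_finite[symmetric]) (use fX in auto)
    also have "measure P (sh ` X) \<le> measure P E"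
      by (intro measure_pmf.finite_measure_mono) (auto simp: X_def)
    finally show ?thesis by simp
  qed
  have stepC1: "measure P {f. \<exists>j\<in>U. \<bar>f j + w j\<bar> > int N} \<le> \<delta>/2"
  proof -
    have "measure P {f. \<exists>j\<in>U. \<bar>f j + w j\<bar> > int N} = measure P (\<Union>j\<in>U. {f. \<bar>f j + w j\<bar> > int N})"
      by (intro arg_cong[where f="measure P"]) auto
    also have "\<dots> \<le> (\<Sum>j\<in>U. measure P {f. \<bar>f j + w j\<bar> > int N})"
      by (rule measure_pmf.finite_measure_subadditive_finite) (use fin in auto)
    also have "\<dots> \<le> (\<Sum>j\<in>U. 2 * exp (-c * real (N - B + 1)))"
    proof (intro sum_mono)
      fix j assume j: "j \<in> U"
      have "measure P {f. \<bar>f j + w j\<bar> > int N} = measure (tlap c N) {z. \<bar>z + w j\<bar> > int N}"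
        unfolding P_def by (rule marginal_prob[OF fin j])
      also have "\<dots> \<le> measure (tlap c N) {z. \<bar>z\<bar> \<ge> int (N - B + 1)}"
        using wB[of j] BN by (intro measure_pmf.finite_measure_mono) auto
      also have "\<dots> \<le> 2 * exp (-c * real (N - B + 1))" by (rule tail_tlap) (use c in auto)
      finally show "measure P {f. \<bar>f j + w j\<bar> > int N} \<le> 2 * exp (-c * real (N - B + 1))" .
    qed
    also have "\<dots> = real (card U) * (2 * exp (-c * real (N - B + 1)))" by simp
    also have "\<dots> \<le> \<delta>/2" using tl by simp
    finally show ?thesis .
  qed
  have stepC2: "measure P {f. Lz f > \<epsilon>} \<le> \<delta>/2"
  proof (cases "(\<Sum>j\<in>U. (real_of_int (w j))^2) = 0")
    case True
    then have "\<forall>j\<in>U. w j = 0" using fin by (subst (asm) sum_nonneg_eq_0_iff) auto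
    then have "Lz f = 0" for f by (simp add: Lz_def)
    then show ?thesis using \<epsilon> \<delta> by simp
  next
    case False
    define Q' where "Q' = (\<Sum>j\<in>U. (real_of_int (w j))^2)"
    have Q'pos: "Q' > 0" using False by (simp add: Q'_def sum_nonneg order_le_neq_trans)
    define X where "X = (\<lambda>j (f::'a \<Rightarrow> int). c * (\<bar>real_of_int (f j + w j)\<bar> - \<bar>real_of_int (f j)\<bar>))"
    define \<mu> where "\<mu> = (\<Sum>j\<in>U. measure_pmf.expectation P (X j))"
    interpret H: Hoeffding_ineq "measure_pmf P" U X "\<lambda>j. - (c * \<bar>real_of_int (w j)\<bar>)" "\<lambda>j. c * \<bar>real_of_int (w j)\<bar>" \<mu>
    proof unfold_locales
      show "finite U" by fact
      have "prob_space.indep_vars (measure_pmf P) (\<lambda>_. count_space UNIV) (\<lambda>x f. f x) U"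
        unfolding P_def by (rule indep_vars_Pi_pmf[OF fin])
      then have "prob_space.indep_vars (measure_pmf P) (\<lambda>_. borel) (\<lambda>j f. (\<lambda>z. c * (\<bar>real_of_int (z + w j)\<bar> - \<bar>real_of_int z\<bar>)) (f j)) U"
        by (rule prob_space.indep_vars_compose2[OF measure_pmf.prob_space_axioms]) auto
      then show "prob_space.indep_vars (measure_pmf P) (\<lambda>_. borel) X U" by (simp add: X_def)
      fix j assume "j \<in> U"
      show "AE x in measure_pmf P. X j x \<in> {- (c * \<bar>real_of_int (w j)\<bar>)..c * \<bar>real_of_int (w j)\<bar>}"
      proof (intro AE_pmfI)
        fix f
        have "\<bar>\<bar>real_of_int (f j + w j)\<bar> - \<bar>real_of_int (f j)\<bar>\<bar> \<le> \<bar>real_of_int (w j)\<bar>" by simp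
        then have "\<bar>X j f\<bar> \<le> c * \<bar>real_of_int (w j)\<bar>" using c by (simp add: X_def abs_mult mult_left_mono)
        then show "X j f \<in> {- (c * \<bar>real_of_int (w j)\<bar>)..c * \<bar>real_of_int (w j)\<bar>}" by auto
      qed
    qed (simp add: \<mu>_def)
    have mu_le: "\<mu> \<le> \<epsilon>/2"
    proof -
      have "\<mu> \<le> (\<Sum>j\<in>U. 2 * exp (-c * real (N - B + 1)) + c^2 * (real_of_int (w j))^2)"
        unfolding \<mu>_def
      proof (intro sum_mono)
        fix j assume j: "j \<in> U"
        have "measure_pmf.expectation P (X j) = measure_pmf.expectation (tlap c N) (\<lambda>z. c * (\<bar>real_of_int (z + w j)\<bar> - \<bar>real_of_int z\<bar>))"
          unfolding P_def X_def by (rule marginal_exp[OF fin j])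
        also have "\<dots> \<le> 2 * exp (-c * real (N - nat \<bar>w j\<bar> + 1)) + c^2 * (real_of_int (w j))^2"
          by (rule exp_loss) (use c cw[of j] wB[of j] BN in auto)
        also have "exp (-c * real (N - nat \<bar>w j\<bar> + 1)) \<le> exp (-c * real (N - B + 1))"
          using wB[of j] BN c by (auto intro!: mult_left_mono)
        finally show "measure_pmf.expectation P (X j) \<le> 2 * exp (-c * real (N - B + 1)) + c^2 * (real_of_int (w j))^2"
          by simp
      qed
      also have "\<dots> = real (card U) * (2 * exp (-c * real (N - B + 1))) + c^2 * Q'"
        by (simp add: sum.distrib Q'_def sum_distrib_left)
      also have "c^2 * Q' \<le> c^2 * Qb" using Q by (intro mult_left_mono) (auto simp: Q'_def)
      finally show ?thesis using tl e1 by linarith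
    qed
    have sumsq: "(\<Sum>j\<in>U. (c * \<bar>real_of_int (w j)\<bar> - - (c * \<bar>real_of_int (w j)\<bar>))^2) = 4 * c^2 * Q'"
      by (simp add: Q'_def sum_distrib_left power_mult_distrib algebra_simps)
    have "measure P {f. Lz f > \<epsilon>} \<le> measure P {f \<in> space (measure_pmf P). (\<Sum>j\<in>U. X j f) \<ge> \<mu> + \<epsilon>/2}"
      using mu_le by (intro measure_pmf.finite_measure_mono) (auto simp: Lz_def X_def)
    also have "\<dots> \<le> exp (-2 * (\<epsilon>/2)^2 / (\<Sum>j\<in>U. (c * \<bar>real_of_int (w j)\<bar> - - (c * \<bar>real_of_int (w j)\<bar>))^2))"
      by (rule H.Hoeffding_ineq_ge) (use \<epsilon> sumsq Q'pos c in auto)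
    also have "\<dots> = exp (- (\<epsilon>^2 / (8 * c^2 * Q')))"
      unfolding sumsq by (simp add: power_divide)
    also have "\<dots> \<le> exp (- ln (2/\<delta>))"
    proof -
      have "8 * c^2 * Q' * ln (2/\<delta>) \<le> 8 * c^2 * Qb * ln (2/\<delta>)"
      proof -
        have "ln (2/\<delta>) \<ge> 0" using \<delta> by simp
        then show ?thesis using Q by (intro mult_right_mono mult_left_mono) (auto simp: Q'_def)
      qed
      then have A: "(8 * c^2 * Q') * ln (2/\<delta>) \<le> \<epsilon>^2" using e2 by linarith
      have pos: "8 * c^2 * Q' > 0" using Q'pos c by simp
      have "ln (2/\<delta>) \<le> \<epsilon>^2 / (8 * c^2 * Q')" using A pos by (simp add: pos_le_divide_eq mult.commute)
      then show ?thesis by simp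
    qed
    also have "\<dots> = \<delta>/2" using \<delta> by (simp add: exp_minus)
    finally show ?thesis .
  qed
  have "measure P {f. sh f \<in> E} \<le> measure P ({f. sh f \<in> E} \<inter> Good) + measure P (- Good)"
  proof -
    have "measure P {f. sh f \<in> E} \<le> measure P (({f. sh f \<in> E} \<inter> Good) \<union> (- Good))"
      by (intro measure_pmf.finite_measure_mono) auto
    also have "\<dots> \<le> measure P ({f. sh f \<in> E} \<inter> Good) + measure P (- Good)"
      by (rule measure_subadditive) (auto simp: measure_pmf.emeasure_eq_measure)
    finally show ?thesis .
  qed
  also have "measure P (- Good) \<le> measure P {f. \<exists>j\<in>U. \<bar>f j + w j\<bar> > int N} + measure P {f. Lz f > \<epsilon>}"
  proof -
    have "measure P (- Good) \<le> measure P ({f. \<exists>j\<in>U. \<bar>f j + w j\<bar> > int N} \<union> {f. Lz f > \<epsilon>})"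
      by (intro measure_pmf.finite_measure_mono) (auto simp: Good_def not_le)
    also have "\<dots> \<le> measure P {f. \<exists>j\<in>U. \<bar>f j + w j\<bar> > int N} + measure P {f. Lz f > \<epsilon>}"
      by (rule measure_subadditive) (auto simp: measure_pmf.emeasure_eq_measure)
    finally show ?thesis .
  qed
  finally show ?thesis using stepB stepC1 stepC2 by (simp add: P_def sh_def)
qed

definition Hs :: "nat \<Rightarrow> update list \<Rightarrow> nat \<Rightarrow> nat \<Rightarrow> int" where
  "Hs n xs t i = int (deg_hist n (graph_at xs t) i)"

definition nodev :: "nat \<Rightarrow> update list \<Rightarrow> nat \<times> nat \<times> nat \<Rightarrow> int" where
  "nodev n xs p = (case p of (l, m, i) \<Rightarrow> Hs n xs (Suc m * 2^l) i - Hs n xs (m * 2^l) i)"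

definition Lev :: "nat \<Rightarrow> nat set" where
  "Lev T = {l. 2^l \<le> T}"

definition Uset :: "nat \<Rightarrow> nat \<Rightarrow> (nat \<times> nat \<times> nat) set" where
  "Uset n T = (SIGMA l:Lev T. SIGMA m:{..<T div 2^l}. {..<n})"

definition avec :: "nat \<Rightarrow> nat \<Rightarrow> update list \<Rightarrow> nat \<times> nat \<times> nat \<Rightarrow> int" where
  "avec n T xs p = (if p \<in> Uset n T then nodev n xs p else 0)"

definition dl :: "update list \<Rightarrow> nat \<Rightarrow> nat \<Rightarrow> nat \<Rightarrow> nat \<Rightarrow> int" where
  "dl xs v s e i = (if dg xs v e = i then 1 else 0) - (if dg xs v s = i then 1 else 0)"

lemma Lev_sub: "Lev T \<subseteq> {..T}"
proof
  fix l assume "l \<in> Lev T"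
  then have "2^l \<le> T" by (simp add: Lev_def)
  moreover have "l < 2^l" by (rule less_exp)
  ultimately have "l \<le> T" by linarith
  then show "l \<in> {..T}" by simp
qed

lemma finite_Lev: "finite (Lev T)"
  using Lev_sub finite_subset by blast

lemma finite_Uset: "finite (Uset n T)"
  unfolding Uset_def using finite_Lev by (intro finite_SigmaI) auto

lemma nodev_sum: "nodev n xs (l, m, i) = (\<Sum>v<n. dl xs v (m * 2^l) (Suc m * 2^l) i)"
  by (simp add: nodev_def Hs_def deg_hist_sum dl_def dg_def sum_subtractf)

lemma dl_abs: "\<bar>dl xs v s e i\<bar> \<le> 1"
  by (simp add: dl_def)

lemma dl_sum:
  assumes "s \<le> e"
  shows "(\<Sum>i<n. \<bar>dl xs v s e i\<bar>) \<le> 2 * (int (dg xs v e) - int (dg xs v s))"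
proof (cases "dg xs v e = dg xs v s")
  case True
  then show ?thesis by (simp add: dl_def)
next
  case False
  then have gt: "dg xs v e > dg xs v s" using dg_mono[OF assms, of xs v] by simp
  have one: "(\<Sum>i<n. (if a = i then 1 else 0::int)) \<le> 1" for a :: nat
    by (simp add: sum.delta)
  have "(\<Sum>i<n. \<bar>dl xs v s e i\<bar>) \<le> (\<Sum>i<n. (if dg xs v e = i then 1 else 0) + (if dg xs v s = i then 1 else 0))"
    by (intro sum_mono) (simp add: dl_def)
  also have "\<dots> = (\<Sum>i<n. (if dg xs v e = i then 1 else 0)) + (\<Sum>i<n. (if dg xs v s = i then 1 else 0))"
    by (rule sum.distrib)
  also have "\<dots> \<le> 2" using one[of "dg xs v e"] one[of "dg xs v s"] by linarith
  also have "\<dots> \<le> 2 * (int (dg xs v e) - int (dg xs v s))" using gt by simp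
  finally show ?thesis .
qed

lemma level_sum:
  assumes "valid_stream n T xs"
  shows "(\<Sum>m<K. \<Sum>i<n. \<bar>dl xs v (m * 2^l) (Suc m * 2^l) i\<bar>) \<le> 2 * int n"
proof -
  have "(\<Sum>m<K. \<Sum>i<n. \<bar>dl xs v (m * 2^l) (Suc m * 2^l) i\<bar>)
        \<le> (\<Sum>m<K. 2 * (int (dg xs v (Suc m * 2^l)) - int (dg xs v (m * 2^l))))"
    by (intro sum_mono dl_sum) simp
  also have "\<dots> = 2 * (\<Sum>m<K. int (dg xs v (Suc m * 2^l)) - int (dg xs v (m * 2^l)))"
    by (simp add: sum_distrib_left)
  also have "(\<Sum>m<K. int (dg xs v (Suc m * 2^l)) - int (dg xs v (m * 2^l))) = int (dg xs v (K * 2^l)) - int (dg xs v (0 * 2^l))"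
    by (rule sum_lessThan_telescope[where f = "\<lambda>m. int (dg xs v (m * 2^l))"])
  also have "\<dots> \<le> int n" using dg_le[OF assms, of v "K * 2^l"] by simp
  finally show ?thesis by simp
qed

locale nbr =
  fixes n T :: nat and xs ys :: "update list" and k :: nat
  assumes vx: "valid_stream n T xs" and vy: "valid_stream n T ys"
    and eqk: "\<forall>j < length xs. j \<noteq> k \<longrightarrow> xs ! j = ys ! j"
begin

definition Aff where "Aff = (if k < length xs then updE (xs ! k) \<union> updE (ys ! k) else {})"

lemma len: "length xs = length ys" using vx vy by (simp add: valid_stream_def)

lemma same_dg: "v \<notin> Aff \<Longrightarrow> dg xs v t = dg ys v t"
  unfolding dg_def degree_def using same_inc[OF len eqk, of v t] by (simp add: Aff_def)

lemma fin_Aff: "finite Aff" unfolding Aff_def by (rule finite_aff[OF vx vy])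
lemma card_Aff: "card Aff \<le> 4" unfolding Aff_def by (rule card_aff[OF vx vy])

definition A' where "A' = {..<n} \<inter> Aff"
lemma fin_A': "finite A'" by (simp add: A'_def)
lemma card_A': "card A' \<le> 4"
  using card_Aff card_mono[OF fin_Aff, of A'] by (auto simp: A'_def)

lemma diff_decomp:
  "nodev n xs (l, m, i) - nodev n ys (l, m, i) =
     (\<Sum>v\<in>A'. dl xs v (m * 2^l) (Suc m * 2^l) i - dl ys v (m * 2^l) (Suc m * 2^l) i)"
proof -
  have "nodev n xs (l, m, i) - nodev n ys (l, m, i) =
        (\<Sum>v<n. dl xs v (m * 2^l) (Suc m * 2^l) i - dl ys v (m * 2^l) (Suc m * 2^l) i)"
    by (simp add: nodev_sum sum_subtractf)
  also have "\<dots> = (\<Sum>v\<in>A'. dl xs v (m * 2^l) (Suc m * 2^l) i - dl ys v (m * 2^l) (Suc m * 2^l) i)"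
  proof (rule sum.mono_neutral_right)
    show "finite {..<n}" by simp
    show "A' \<subseteq> {..<n}" by (auto simp: A'_def)
    show "\<forall>v\<in>{..<n} - A'. dl xs v (m * 2^l) (Suc m * 2^l) i - dl ys v (m * 2^l) (Suc m * 2^l) i = 0"
      by (auto simp: A'_def dl_def same_dg)
  qed
  finally show ?thesis .
qed

lemma diff_abs: "\<bar>nodev n xs p - nodev n ys p\<bar> \<le> 8"
proof -
  obtain l m i where p: "p = (l, m, i)" by (cases p) auto
  have "\<bar>nodev n xs p - nodev n ys p\<bar> \<le> (\<Sum>v\<in>A'. \<bar>dl xs v (m * 2^l) (Suc m * 2^l) i - dl ys v (m * 2^l) (Suc m * 2^l) i\<bar>)"
    unfolding p diff_decomp by (rule sum_abs)
  also have "\<dots> \<le> (\<Sum>v\<in>A'. 2)"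
  proof (intro sum_mono)
    fix v
    have "\<bar>dl xs v (m * 2^l) (Suc m * 2^l) i\<bar> \<le> 1" "\<bar>dl ys v (m * 2^l) (Suc m * 2^l) i\<bar> \<le> 1"
      by (rule dl_abs)+
    then show "\<bar>dl xs v (m * 2^l) (Suc m * 2^l) i - dl ys v (m * 2^l) (Suc m * 2^l) i\<bar> \<le> 2" by linarith
  qed
  also have "\<dots> \<le> 8" using card_A' by simp
  finally show ?thesis .
qed

lemma diff_level: "(\<Sum>m<K. \<Sum>i<n. \<bar>nodev n xs (l, m, i) - nodev n ys (l, m, i)\<bar>) \<le> 16 * int n"
proof -
  let ?dx = "\<lambda>v m i. \<bar>dl xs v (m * 2^l) (Suc m * 2^l) i\<bar>"
  let ?dy = "\<lambda>v m i. \<bar>dl ys v (m * 2^l) (Suc m * 2^l) i\<bar>"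
  have "(\<Sum>m<K. \<Sum>i<n. \<bar>nodev n xs (l, m, i) - nodev n ys (l, m, i)\<bar>) \<le> (\<Sum>m<K. \<Sum>i<n. \<Sum>v\<in>A'. ?dx v m i + ?dy v m i)"
  proof (intro sum_mono)
    fix m i
    have "\<bar>nodev n xs (l, m, i) - nodev n ys (l, m, i)\<bar> \<le> (\<Sum>v\<in>A'. \<bar>dl xs v (m * 2^l) (Suc m * 2^l) i - dl ys v (m * 2^l) (Suc m * 2^l) i\<bar>)"
      unfolding diff_decomp by (rule sum_abs)
    also have "\<dots> \<le> (\<Sum>v\<in>A'. ?dx v m i + ?dy v m i)" by (intro sum_mono) (rule abs_triangle_ineq4)
    finally show "\<bar>nodev n xs (l, m, i) - nodev n ys (l, m, i)\<bar> \<le> (\<Sum>v\<in>A'. ?dx v m i + ?dy v m i)" .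
  qed
  also have "\<dots> = (\<Sum>v\<in>A'. (\<Sum>m<K. \<Sum>i<n. ?dx v m i) + (\<Sum>m<K. \<Sum>i<n. ?dy v m i))"
    by (simp add: sum.distrib sum.swap[of _ A'] sum.swap[of _ "{..<n}" "{..<K}"])
  also have "\<dots> \<le> (\<Sum>v\<in>A'. 2 * int n + 2 * int n)"
    by (intro sum_mono add_mono level_sum[OF vx] level_sum[OF vy])
  also have "\<dots> = int (card A') * (4 * int n)" by simp
  also have "\<dots> \<le> 4 * (4 * int n)" using card_A' by (intro mult_right_mono) auto
  finally show ?thesis by simp
qed

lemma Q_bound:
  "(\<Sum>p\<in>Uset n T. (real_of_int (avec n T xs p - avec n T ys p))^2) \<le> 128 * real n * real (card (Lev T))"
proof -
  have sq: "(real_of_int x)^2 \<le> 8 * real_of_int \<bar>x\<bar>" if "\<bar>x\<bar> \<le> 8" for x :: int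
  proof -
    have "(real_of_int x)^2 = real_of_int \<bar>x\<bar> * real_of_int \<bar>x\<bar>" by (simp add: power2_eq_square)
    also have "\<dots> \<le> 8 * real_of_int \<bar>x\<bar>" using that by (intro mult_right_mono) auto
    finally show ?thesis .
  qed
  have "(\<Sum>p\<in>Uset n T. (real_of_int (avec n T xs p - avec n T ys p))^2)
      \<le> (\<Sum>p\<in>Uset n T. 8 * real_of_int \<bar>nodev n xs p - nodev n ys p\<bar>)"
  proof (intro sum_mono)
    fix p
    have "(real_of_int (nodev n xs p - nodev n ys p))^2 \<le> 8 * real_of_int \<bar>nodev n xs p - nodev n ys p\<bar>"
      by (rule sq) (rule diff_abs)
    then show "(real_of_int (avec n T xs p - avec n T ys p))^2 \<le> 8 * real_of_int \<bar>nodev n xs p - nodev n ys p\<bar>"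
      unfolding avec_def by (cases "p \<in> Uset n T") auto
  qed
  also have "\<dots> = 8 * real_of_int (\<Sum>p\<in>Uset n T. \<bar>nodev n xs p - nodev n ys p\<bar>)"
    by (simp add: sum_distrib_left)
  also have "(\<Sum>p\<in>Uset n T. \<bar>nodev n xs p - nodev n ys p\<bar>) = (\<Sum>l\<in>Lev T. \<Sum>m<T div 2^l. \<Sum>i<n. \<bar>nodev n xs (l, m, i) - nodev n ys (l, m, i)\<bar>)"
    unfolding Uset_def using finite_Lev by (simp add: sum.Sigma)
  also have "\<dots> \<le> (\<Sum>l\<in>Lev T. 16 * int n)" by (intro sum_mono diff_level)
  also have "\<dots> = 16 * int n * int (card (Lev T))" by simp
  finally show ?thesis by simp
qed

end

lemma tree_telescope:
  fixes F :: "nat \<Rightarrow> 'a::ab_group_add"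
  assumes "t < 2^L"
  shows "F t - F 0 = (\<Sum>l<L. if odd (t div 2^l) then F ((t div 2^l) * 2^l) - F ((t div 2^l - 1) * 2^l) else 0)"
proof -
  define G where "G = (\<lambda>l. F ((t div 2^l) * 2^l))"
  have step: "(if odd (t div 2^l) then F ((t div 2^l) * 2^l) - F ((t div 2^l - 1) * 2^l) else 0) = G l - G (Suc l)" for l
  proof -
    define q where "q = t div 2^l"
    have p2: "(2::nat)^(Suc l) = 2^l * 2" by simp
    have q2: "t div 2^(Suc l) = q div 2" unfolding q_def p2 by (rule div_mult2_eq)
    have GS: "G (Suc l) = F ((q div 2) * 2^(Suc l))" unfolding G_def q2 ..
    have G0: "G l = F (q * 2^l)" unfolding G_def q_def ..
    have "(if odd q then F (q * 2^l) - F ((q - 1) * 2^l) else 0) = G l - G (Suc l)"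
    proof (cases "odd q")
      case True
      then have "(q div 2) * 2 = q - 1" by (metis odd_two_times_div_two_nat mult.commute)
      then have e: "(q div 2) * 2^(Suc l) = (q - 1) * 2^l" by (metis mult.assoc mult.commute power_Suc)
      have "G (Suc l) = F ((q - 1) * 2^l)" by (simp only: GS e)
      then show ?thesis using True G0 by simp
    next
      case False
      then have "(q div 2) * 2 = q" by simp
      then have e: "(q div 2) * 2^(Suc l) = q * 2^l" by (metis mult.assoc mult.commute power_Suc)
      have "G (Suc l) = F (q * 2^l)" by (simp only: GS e)
      then show ?thesis using False G0 by simp
    qed
    then show ?thesis by (simp only: q_def)
  qed
  have "(\<Sum>l<L. if odd (t div 2^l) then F ((t div 2^l) * 2^l) - F ((t div 2^l - 1) * 2^l) else 0)
        = (\<Sum>l<L. G l - G (Suc l))" by (simp add: step)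
  also have "\<dots> = G 0 - G L" by (rule sum_lessThan_telescope')
  also have "G 0 = F t" by (simp add: G_def)
  also have "G L = F 0" using assms by (simp add: G_def)
  finally show ?thesis by simp
qed

definition Phi :: "nat \<Rightarrow> nat \<Rightarrow> (nat \<times> nat \<times> nat \<Rightarrow> int) \<Rightarrow> nat \<Rightarrow> nat \<Rightarrow> real" where
  "Phi n T v t i = (if i < n then real (deg_hist n {} i) +
     (\<Sum>l<T+1. if odd (min t T div 2^l) then real_of_int (v (l, min t T div 2^l - 1, i)) else 0) else 0)"

definition Amain :: "nat \<Rightarrow> nat \<Rightarrow> (nat \<Rightarrow> real) \<Rightarrow> update list \<Rightarrow> nat \<Rightarrow> real" where
  "Amain n T r p i = (if i < n then real (deg_hist n {} i) +
     (\<Sum>l<T+1. if odd (length p div 2^l)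
        then real_of_int (nodev n p (l, length p div 2^l - 1, i)) + r (to_nat (l, length p div 2^l - 1, i))
        else 0) else 0)"

definition emb :: "(nat \<times> nat \<times> nat \<Rightarrow> int) \<Rightarrow> nat \<Rightarrow> real" where
  "emb f = (\<lambda>k. real_of_int (f (from_nat k)))"

lemma graph_at_take: "s \<le> t \<Longrightarrow> graph_at (take t xs) s = graph_at xs s"
  by (simp add: graph_at_def min_absorb1)

lemma graph_at_0: "graph_at xs 0 = {}"
  by (simp add: graph_at_def)

lemma node_in_U:
  assumes "odd (t div 2^l)" "t \<le> T" "i < n"
  shows "(l, t div 2^l - 1, i) \<in> Uset n T"
proof -
  have q1: "t div 2^l \<ge> 1" using assms(1) by (cases "t div 2^l") auto
  have "2^l \<le> t" using q1 by (metis div_less not_less not_one_le_zero)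
  then have "l \<in> Lev T" using assms(2) by (simp add: Lev_def)
  moreover have "t div 2^l \<le> T div 2^l" using assms(2) by (rule div_le_mono)
  ultimately show ?thesis using q1 assms(3) by (auto simp: Uset_def)
qed

lemma nodev_take:
  assumes "odd (t' div 2^l)" "t' \<le> t"
  shows "nodev n (take t xs) (l, t' div 2^l - 1, i) = nodev n xs (l, t' div 2^l - 1, i)"
proof -
  have q1: "t' div 2^l \<ge> 1" using assms(1) by (cases "t' div 2^l") auto
  have le: "(t' div 2^l) * 2^l \<le> t" using assms(2) div_times_less_eq_dividend le_trans by blast
  have "Suc (t' div 2^l - 1) * 2^l \<le> t" using q1 le by simp
  moreover have "(t' div 2^l - 1) * 2^l \<le> t" using le by (meson diff_le_self le_trans mult_le_mono1)
  ultimately show ?thesis by (simp add: nodev_def Hs_def graph_at_take)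
qed

lemma out_eq:
  assumes "valid_stream n T xs"
  shows "mech_output (Amain n T) (emb f) xs = Phi n T (\<lambda>p. avec n T xs p + f p)"
proof (intro ext)
  fix t i
  have len: "length (take t xs) = min t T" using assms by (simp add: valid_stream_def)
  show "mech_output (Amain n T) (emb f) xs t i = Phi n T (\<lambda>p. avec n T xs p + f p) t i"
  proof (cases "i < n")
    case True
    have "(\<Sum>l<T+1. if odd (min t T div 2^l)
        then real_of_int (nodev n (take t xs) (l, min t T div 2^l - 1, i)) + emb f (to_nat (l, min t T div 2^l - 1, i))
        else 0) = (\<Sum>l<T+1. if odd (min t T div 2^l) then real_of_int (avec n T xs (l, min t T div 2^l - 1, i) + f (l, min t T div 2^l - 1, i)) else 0)"
    proof (intro sum.cong refl)
      fix l
      show "(if odd (min t T div 2^l)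
        then real_of_int (nodev n (take t xs) (l, min t T div 2^l - 1, i)) + emb f (to_nat (l, min t T div 2^l - 1, i))
        else 0) = (if odd (min t T div 2^l) then real_of_int (avec n T xs (l, min t T div 2^l - 1, i) + f (l, min t T div 2^l - 1, i)) else 0)"
      proof (cases "odd (min t T div 2^l)")
        case o: True
        have "(l, min t T div 2^l - 1, i) \<in> Uset n T" by (rule node_in_U[OF o _ True]) simp
        moreover have "nodev n (take t xs) (l, min t T div 2^l - 1, i) = nodev n xs (l, min t T div 2^l - 1, i)"
          by (rule nodev_take[OF o]) simp
        ultimately show ?thesis using o by (simp add: avec_def emb_def)
      qed simp
    qed
    moreover have "mech_output (Amain n T) (emb f) xs t i = real (deg_hist n {} i) + (\<Sum>l<T+1. if odd (min t T div 2^l)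
        then real_of_int (nodev n (take t xs) (l, min t T div 2^l - 1, i)) + emb f (to_nat (l, min t T div 2^l - 1, i))
        else 0)"
      using True by (simp only: mech_output_def Amain_def len if_True)
    ultimately show ?thesis using True by (simp only: Phi_def if_True)
  next
    case False
    then show ?thesis by (simp add: mech_output_def Amain_def Phi_def)
  qed
qed

lemma exact_sum:
  assumes "t \<le> T"
  shows "real (deg_hist n {} i) + (\<Sum>l<T+1. if odd (t div 2^l) then real_of_int (nodev n xs (l, t div 2^l - 1, i)) else 0)
         = real (deg_hist n (graph_at xs t) i)"
proof -
  define F where "F = (\<lambda>s. real_of_int (Hs n xs s i))"
  have tl: "t < 2^(T+1)" using assms less_exp[of T] by (simp del: less_exp)
  have "F t - F 0 = (\<Sum>l<T+1. if odd (t div 2^l) then F ((t div 2^l) * 2^l) - F ((t div 2^l - 1) * 2^l) else 0)"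
    by (rule tree_telescope[OF tl])
  also have "\<dots> = (\<Sum>l<T+1. if odd (t div 2^l) then real_of_int (nodev n xs (l, t div 2^l - 1, i)) else 0)"
  proof (intro sum.cong refl)
    fix l
    show "(if odd (t div 2^l) then F ((t div 2^l) * 2^l) - F ((t div 2^l - 1) * 2^l) else 0) =
          (if odd (t div 2^l) then real_of_int (nodev n xs (l, t div 2^l - 1, i)) else 0)"
    proof (cases "odd (t div 2^l)")
      case True
      then have s: "Suc (t div 2^l - 1) = t div 2^l" by (cases "t div 2^l") auto
      have "nodev n xs (l, t div 2^l - 1, i) = Hs n xs (t div 2^l * 2^l) i - Hs n xs ((t div 2^l - 1) * 2^l) i"
        by (simp only: nodev_def prod.case s)
      then show ?thesis using True by (simp add: F_def)
    qed simp
  qed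
  finally show ?thesis by (simp add: F_def Hs_def graph_at_0)
qed

lemma err_bound:
  assumes "t \<le> T" "i < n" "\<forall>p\<in>Uset n T. \<bar>real_of_int (f p)\<bar> \<le> a" and a0: "0 \<le> a"
  shows "\<bar>(\<Sum>l<T+1. if odd (t div 2^l) then real_of_int (f (l, t div 2^l - 1, i)) else 0)\<bar> \<le> real (card (Lev T)) * a"
proof -
  define J where "J = {l \<in> {..<T+1}. odd (t div 2^l)}"
  have JL: "J \<subseteq> Lev T"
  proof
    fix l assume "l \<in> J"
    then have "(l, t div 2^l - 1, i) \<in> Uset n T" using node_in_U[of t l T i n] assms by (auto simp: J_def)
    then show "l \<in> Lev T" by (auto simp: Uset_def)
  qed
  have "(\<Sum>l<T+1. if odd (t div 2^l) then real_of_int (f (l, t div 2^l - 1, i)) else 0) = (\<Sum>l\<in>J. real_of_int (f (l, t div 2^l - 1, i)))"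
    unfolding J_def by (subst sum.inter_filter) auto
  also have "\<bar>\<dots>\<bar> \<le> (\<Sum>l\<in>J. \<bar>real_of_int (f (l, t div 2^l - 1, i))\<bar>)" by (rule sum_abs)
  also have "\<dots> \<le> (\<Sum>l\<in>J. a)"
  proof (intro sum_mono)
    fix l assume "l \<in> J"
    then have "(l, t div 2^l - 1, i) \<in> Uset n T" using node_in_U[of t l T i n] assms by (auto simp: J_def)
    then show "\<bar>real_of_int (f (l, t div 2^l - 1, i))\<bar> \<le> a" using assms(3) by blast
  qed
  also have "\<dots> = real (card J) * a" by simp
  also have "\<dots> \<le> real (card (Lev T)) * a"
  proof (intro mult_right_mono)
    show "real (card J) \<le> real (card (Lev T))" using card_mono[OF finite_Lev JL] by simp
    show "0 \<le> a" by (rule a0)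
  qed
  finally show ?thesis .
qed

definition Pm :: "nat \<Rightarrow> nat \<Rightarrow> real \<Rightarrow> nat \<Rightarrow> (nat \<times> nat \<times> nat \<Rightarrow> int) pmf" where
  "Pm n T c N = Pi_pmf (Uset n T) 0 (\<lambda>_. tlap c N)"

definition Rm :: "nat \<Rightarrow> nat \<Rightarrow> real \<Rightarrow> nat \<Rightarrow> (nat \<Rightarrow> real) measure" where
  "Rm n T c N = measure_pmf (map_pmf emb (Pm n T c N))"

lemma Rm_prob: "measure (Rm n T c N) {r \<in> space (Rm n T c N). Q r} = measure (Pm n T c N) {f. Q (emb f)}"
  by (simp add: Rm_def vimage_def)

lemma main_dp:
  assumes c: "c > 0" "8 * c \<le> 1" and N: "8 \<le> N"
    and e1: "c^2 * (128 * real n * real (card (Lev T))) \<le> \<epsilon>/4"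
    and e2: "8 * c^2 * (128 * real n * real (card (Lev T))) * ln (2/\<delta>) \<le> \<epsilon>^2"
    and tl: "real (card (Uset n T)) * (2 * exp (-c * real (N - 8 + 1))) \<le> min (\<delta>/2) (\<epsilon>/4)"
    and \<delta>: "0 < \<delta>" "\<delta> \<le> 1" and \<epsilon>: "0 < \<epsilon>"
  shows "event_level_DP n T \<epsilon> \<delta> (Rm n T c N) (Amain n T)"
  unfolding event_level_DP_def
proof (intro allI impI)
  fix xs ys S
  assume vx: "valid_stream n T xs" and vy: "valid_stream n T ys" and nb: "neighboring xs ys"
  from nb obtain k where eqk: "\<forall>j < length xs. j \<noteq> k \<longrightarrow> xs ! j = ys ! j" by (auto simp: neighboring_def)
  interpret nbr n T xs ys k using vx vy eqk by unfold_locales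
  define w where "w = (\<lambda>p. avec n T xs p - avec n T ys p)"
  define E where "E = {f. Phi n T (\<lambda>p. avec n T ys p + f p) \<in> S}"
  have lx: "measure (Rm n T c N) {r \<in> space (Rm n T c N). mech_output (Amain n T) r xs \<in> S}
        = measure (Pm n T c N) {f. (\<lambda>j. f j + w j) \<in> E}"
  proof -
    have "{f. mech_output (Amain n T) (emb f) xs \<in> S} = {f. (\<lambda>j. f j + w j) \<in> E}"
    proof -
      have "Phi n T (\<lambda>p. avec n T ys p + (f p + w p)) = Phi n T (\<lambda>p. avec n T xs p + f p)" for f
      proof -
        have "(\<lambda>p. avec n T ys p + (f p + w p)) = (\<lambda>p. avec n T xs p + f p)" by (auto simp: w_def)
        then show ?thesis by simp
      qed
      then show ?thesis by (simp add: out_eq[OF vx] E_def)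
    qed
    then show ?thesis by (simp add: Rm_prob)
  qed
  have ly: "measure (Rm n T c N) {r \<in> space (Rm n T c N). mech_output (Amain n T) r ys \<in> S}
        = measure (Pm n T c N) E"
    by (simp add: Rm_prob out_eq[OF vy] E_def)
  have "measure (Pm n T c N) {f. (\<lambda>j. f j + w j) \<in> E} \<le> exp \<epsilon> * measure (Pm n T c N) E + \<delta>"
    unfolding Pm_def
  proof (rule core_dp[where B = 8 and Qb = "128 * real n * real (card (Lev T))"])
    show "finite (Uset n T)" by (rule finite_Uset)
    show "\<And>j. j \<notin> Uset n T \<Longrightarrow> w j = 0" by (simp add: w_def avec_def)
    have wabs: "\<bar>w j\<bar> \<le> 8" for j by (simp add: w_def avec_def diff_abs)
    show "\<And>j. c * \<bar>real_of_int (w j)\<bar> \<le> 1"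
    proof -
      fix j
      have "c * \<bar>real_of_int (w j)\<bar> \<le> c * 8" using wabs[of j] c by (intro mult_left_mono) auto
      then show "c * \<bar>real_of_int (w j)\<bar> \<le> 1" using c by linarith
    qed
    show "\<And>j. nat \<bar>w j\<bar> \<le> 8" using wabs by (simp add: nat_le_iff)
    show "(\<Sum>j\<in>Uset n T. (real_of_int (w j))^2) \<le> 128 * real n * real (card (Lev T))"
      unfolding w_def by (rule Q_bound)
  qed (use c N e1 e2 tl \<delta> \<epsilon> in auto)
  then show "measure (Rm n T c N) {r \<in> space (Rm n T c N). mech_output (Amain n T) r xs \<in> S}
      \<le> exp \<epsilon> * measure (Rm n T c N) {r \<in> space (Rm n T c N). mech_output (Amain n T) r ys \<in> S} + \<delta>"
    using lx ly by simp
qed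

lemma main_acc:
  assumes c: "c > 0" and a: "a \<ge> 0" and tl: "real (card (Uset n T)) * (2 * exp (-c * a)) \<le> 1/3"
    and al: "real (card (Lev T)) * a \<le> \<alpha>"
  shows "accurate n T (Rm n T c N) (Amain n T) \<alpha>"
  unfolding accurate_def
proof (intro allI impI)
  fix xs assume vx: "valid_stream n T xs"
  define G where "G = {f. \<forall>p\<in>Uset n T. \<bar>real_of_int (f p)\<bar> \<le> a}"
  have bad: "measure (Pm n T c N) (- G) \<le> 1/3"
  proof -
    have "- G = (\<Union>p\<in>Uset n T. {f. \<bar>real_of_int (f p)\<bar> > a})" by (auto simp: G_def not_le)
    then have "measure (Pm n T c N) (- G) = measure (Pm n T c N) (\<Union>p\<in>Uset n T. {f. \<bar>real_of_int (f p)\<bar> > a})" by simp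
    also have "\<dots> \<le> (\<Sum>p\<in>Uset n T. measure (Pm n T c N) {f. \<bar>real_of_int (f p)\<bar> > a})"
      by (rule measure_pmf.finite_measure_subadditive_finite) (auto simp: finite_Uset)
    also have "\<dots> \<le> (\<Sum>p\<in>Uset n T. 2 * exp (-c * a))"
    proof (intro sum_mono)
      fix p assume p: "p \<in> Uset n T"
      have "measure (Pm n T c N) {f. \<bar>real_of_int (f p)\<bar> > a} = measure (tlap c N) {z. real_of_int \<bar>z\<bar> > a}"
        unfolding Pm_def using marginal_prob[OF finite_Uset p, where P = "\<lambda>z. real_of_int \<bar>z\<bar> > a" and c = c and N = N] by simp
      also have "\<dots> \<le> 2 * exp (-c * a)" by (rule tail_tlap_real) (use c a in auto)
      finally show "measure (Pm n T c N) {f. \<bar>real_of_int (f p)\<bar> > a} \<le> 2 * exp (-c * a)" .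
    qed
    also have "\<dots> \<le> 1/3" using tl by simp
    finally show ?thesis .
  qed
  have good: "measure (Pm n T c N) G \<ge> 2/3"
    using bad measure_pmf.prob_compl[of G "Pm n T c N"] by (simp add: Compl_eq_Diff_UNIV)
  have sub: "G \<subseteq> {f. \<forall>t\<in>{1..T}. \<forall>i<n. \<bar>Amain n T (emb f) (take t xs) i - real (deg_hist n (graph_at xs t) i)\<bar>
        \<le> \<alpha>}"
  proof (intro subsetI CollectI ballI allI impI)
    fix f t i assume f: "f \<in> G" and t: "t \<in> {1..T}" and i: "i < n"
    have tT: "t \<le> T" "min t T = t" using t by auto
    have "Amain n T (emb f) (take t xs) i = mech_output (Amain n T) (emb f) xs t i"
      by (simp add: mech_output_def)
    also have "\<dots> = Phi n T (\<lambda>p. avec n T xs p + f p) t i" by (simp add: out_eq[OF vx])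
    also have "\<dots> = real (deg_hist n {} i) + (\<Sum>l<T+1. if odd (t div 2^l) then real_of_int (nodev n xs (l, t div 2^l - 1, i)) else 0)
        + (\<Sum>l<T+1. if odd (t div 2^l) then real_of_int (f (l, t div 2^l - 1, i)) else 0)"
    proof -
      have "(\<Sum>l<T+1. if odd (t div 2^l) then real_of_int (avec n T xs (l, t div 2^l - 1, i) + f (l, t div 2^l - 1, i)) else 0)
          = (\<Sum>l<T+1. (if odd (t div 2^l) then real_of_int (nodev n xs (l, t div 2^l - 1, i)) else 0)
               + (if odd (t div 2^l) then real_of_int (f (l, t div 2^l - 1, i)) else 0))"
      proof (intro sum.cong refl)
        fix l
        show "(if odd (t div 2^l) then real_of_int (avec n T xs (l, t div 2^l - 1, i) + f (l, t div 2^l - 1, i)) else 0)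
          = (if odd (t div 2^l) then real_of_int (nodev n xs (l, t div 2^l - 1, i)) else 0)
               + (if odd (t div 2^l) then real_of_int (f (l, t div 2^l - 1, i)) else 0)"
        proof (cases "odd (t div 2^l)")
          case True
          have "(l, t div 2^l - 1, i) \<in> Uset n T" by (rule node_in_U[OF True tT(1) i])
          then show ?thesis using True by (simp add: avec_def)
        qed simp
      qed
      moreover have "Phi n T (\<lambda>p. avec n T xs p + f p) t i = real (deg_hist n {} i) +
        (\<Sum>l<T+1. if odd (t div 2^l) then real_of_int (avec n T xs (l, t div 2^l - 1, i) + f (l, t div 2^l - 1, i)) else 0)"
        by (simp only: Phi_def if_P[OF i] tT(2))
      ultimately show ?thesis by (simp only: sum.distrib add.assoc)
    qed
    also have "real (deg_hist n {} i) + (\<Sum>l<T+1. if odd (t div 2^l) then real_of_int (nodev n xs (l, t div 2^l - 1, i)) else 0)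
        = real (deg_hist n (graph_at xs t) i)" by (rule exact_sum[OF tT(1)])
    finally have "Amain n T (emb f) (take t xs) i - real (deg_hist n (graph_at xs t) i)
        = (\<Sum>l<T+1. if odd (t div 2^l) then real_of_int (f (l, t div 2^l - 1, i)) else 0)" by simp
    also have "\<bar>\<dots>\<bar> \<le> real (card (Lev T)) * a"
      by (rule err_bound[OF tT(1) i _ a]) (use f in \<open>simp add: G_def\<close>)
    finally show "\<bar>Amain n T (emb f) (take t xs) i - real (deg_hist n (graph_at xs t) i)\<bar> \<le> \<alpha>" using al by linarith
  qed
  have "measure (Pm n T c N) G \<le> measure (Pm n T c N) {f. \<forall>t\<in>{1..T}. \<forall>i<n. \<bar>Amain n T (emb f) (take t xs) i - real (deg_hist n (graph_at xs t) i)\<bar>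
        \<le> \<alpha>}"
    by (rule measure_pmf.finite_measure_mono[OF sub]) auto
  then show "2/3 \<le> measure (Rm n T c N) {r \<in> space (Rm n T c N). \<forall>t\<in>{1..T}. \<forall>i<n.
            \<bar>Amain n T r (take t xs) i - real (deg_hist n (graph_at xs t) i)\<bar> \<le> \<alpha>}"
    using good by (simp add: Rm_prob)
qed

lemma main_cm: "continual_mechanism n T (Rm n T c N) (Amain n T)"
  unfolding continual_mechanism_def Rm_def
  by (simp add: measure_pmf.prob_space_axioms measurable_pmf_measure1)

lemma ln_lower: "x > 0 \<Longrightarrow> 1 - 1/x \<le> ln (x::real)"
proof -
  assume x: "x > 0"
  have "exp (- ln x) \<ge> 1 + (- ln x)" by (rule exp_ge_add_one_self)
  moreover have "exp (- ln x) = 1/x" using x by (simp add: exp_minus inverse_eq_divide)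
  ultimately show ?thesis by linarith
qed

lemma ln2_half: "ln (2::real) \<ge> 1/2"
  using ln_lower[of 2] by simp

lemma card_Lev_ge1: "T \<ge> 1 \<Longrightarrow> card (Lev T) \<ge> 1"
proof -
  assume "T \<ge> 1"
  then have "0 \<in> Lev T" by (simp add: Lev_def)
  then have "Lev T \<noteq> {}" by blast
  then show ?thesis using finite_Lev[of T] by (simp add: Suc_le_eq card_gt_0_iff)
qed

lemma card_Lev_log:
  assumes "T \<ge> 1"
  shows "real (card (Lev T)) \<le> log 2 (real T) + 1"
proof -
  have sub: "Lev T \<subseteq> {..nat \<lfloor>log 2 (real T)\<rfloor>}"
  proof
    fix l assume "l \<in> Lev T"
    then have "2^l \<le> T" by (simp add: Lev_def)
    then have "(2::real) powr (real l) \<le> real T" by (simp add: powr_realpow)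
    then have "real l \<le> log 2 (real T)" using assms by (subst le_log_iff) auto
    then have "l \<le> nat \<lfloor>log 2 (real T)\<rfloor>" by linarith
    then show "l \<in> {..nat \<lfloor>log 2 (real T)\<rfloor>}" by simp
  qed
  have "card (Lev T) \<le> card {..nat \<lfloor>log 2 (real T)\<rfloor>}" by (intro card_mono sub) auto
  then have "real (card (Lev T)) \<le> real (nat \<lfloor>log 2 (real T)\<rfloor>) + 1" by simp
  also have "real (nat \<lfloor>log 2 (real T)\<rfloor>) \<le> log 2 (real T)"
  proof -
    have "log 2 (real T) \<ge> 0" using assms by simp
    then show ?thesis by linarith
  qed
  finally show ?thesis by simp
qed

lemma card_Lev_L:
  assumes "T \<ge> 1" "n \<ge> 1"
  shows "real (card (Lev T)) \<le> 4 * ln (real n + real T + 2)"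
proof -
  define X where "X = real n + real T + 2"
  have X4: "X \<ge> 4" using assms by (simp add: X_def)
  have "log 2 (real T) = ln (real T) / ln 2" by (simp add: log_def)
  also have "\<dots> \<le> 2 * ln (real T)"
  proof -
    have "ln (real T) \<ge> 0" using assms by simp
    then have "ln (real T) / ln 2 \<le> ln (real T) / (1/2)"
      using ln2_half by (intro divide_left_mono) auto
    then show ?thesis by simp
  qed
  also have "ln (real T) \<le> ln X" using assms by (simp add: X_def)
  finally have a: "log 2 (real T) \<le> 2 * ln X" by simp
  have "ln X \<ge> 1 - 1/X" using X4 by (intro ln_lower) auto
  moreover have "1/X \<le> 1/4" using X4 by simp
  ultimately have b: "1 \<le> 2 * ln X" by linarith
  have "real (card (Lev T)) \<le> log 2 (real T) + 1" by (rule card_Lev_log[OF assms(1)])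
  also have "\<dots> \<le> 4 * ln X" using a b by linarith
  finally show ?thesis by (simp add: X_def)
qed

lemma card_Uset: "card (Uset n T) \<le> card (Lev T) * T * n"
proof -
  have "card (Uset n T) = (\<Sum>l\<in>Lev T. card (SIGMA m:{..<T div 2^l}. {..<n}))"
    unfolding Uset_def by (rule card_SigmaI) (auto simp: finite_Lev)
  also have "\<dots> = (\<Sum>l\<in>Lev T. (T div 2^l) * n)" by (simp add: card_cartesian_product)
  also have "\<dots> \<le> (\<Sum>l\<in>Lev T. T * n)" by (intro sum_mono mult_right_mono) auto
  also have "\<dots> = card (Lev T) * T * n" by simp
  finally show ?thesis .
qed

lemma ln_Uset:
  assumes "T \<ge> 1" "n \<ge> 1"
  shows "ln (6 * real (card (Uset n T)) + 1) \<le> 6 * ln (real n + real T + 2)"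
proof -
  define X where "X = real n + real T + 2"
  have X4: "X \<ge> 4" using assms by (simp add: X_def)
  have D: "card (Lev T) \<le> T + 1" using card_mono[OF _ Lev_sub[of T]] by simp
  have "real (card (Uset n T)) \<le> real (card (Lev T) * T * n)" using card_Uset by (simp only: of_nat_le_iff)
  also have "\<dots> = real (card (Lev T)) * real T * real n" by simp
  also have "\<dots> \<le> X * X * X"
    using D by (intro mult_mono) (auto simp: X_def)
  finally have cu: "real (card (Uset n T)) \<le> X^3" by (simp add: power3_eq_cube)
  have "6 * real (card (Uset n T)) + 1 \<le> 6 * X^3 + 1" using cu by simp
  also have "\<dots> \<le> X^3 * X^3"
  proof -
    have "X^3 \<ge> 64" using X4 power_mono[OF X4, of 3] by simp
    then have "X^3 * X^3 \<ge> 64 * X^3" using X4 by (intro mult_right_mono) auto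
    then show ?thesis using \<open>X^3 \<ge> 64\<close> by linarith
  qed
  also have "\<dots> = X^6" by (simp add: power_add[symmetric])
  finally have "ln (6 * real (card (Uset n T)) + 1) \<le> ln (X^6)" by (intro ln_mono) auto
  also have "ln (X^6) = 6 * ln X" using X4 by (simp add: ln_realpow)
  finally show ?thesis by (simp add: X_def)
qed

lemma lg_bound:
  fixes \<delta> :: real
  assumes "0 < \<delta>" "\<delta> < 2/3"
  shows "ln (2/\<delta>) \<le> 4 * ln (1/\<delta>)"
proof -
  have "ln (1/\<delta>) \<ge> 1 - \<delta>" using ln_lower[of "1/\<delta>"] assms by simp
  then have l: "ln (1/\<delta>) \<ge> 1/3" using assms by linarith
  have "ln (2/\<delta>) = ln 2 + ln (1/\<delta>)" using assms by (simp add: ln_div)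
  then show ?thesis using ln_2_less_1 l by linarith
qed

lemma triv_mech:
  assumes "n = 0 \<or> T = 0" "0 < \<delta>" "0 < \<epsilon>"
  shows "\<exists>(R::(nat \<Rightarrow> real) measure) A. continual_mechanism n T R A \<and> event_level_DP n T \<epsilon> \<delta> R A \<and> accurate n T R A \<alpha>"
proof (intro exI conjI)
  let ?R = "measure_pmf (return_pmf (\<lambda>_::nat. 0::real))"
  let ?A = "\<lambda>(r::nat \<Rightarrow> real) (p::update list) (i::nat). 0::real"
  show "continual_mechanism n T ?R ?A"
    unfolding continual_mechanism_def by (simp add: measure_pmf.prob_space_axioms measurable_pmf_measure1)
  show "event_level_DP n T \<epsilon> \<delta> ?R ?A"
    unfolding event_level_DP_def
  proof (intro allI impI)
    fix xs ys :: "update list" and S :: "(nat \<Rightarrow> nat \<Rightarrow> real) set"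
    have eq: "mech_output ?A r zs = (\<lambda>t i. 0)" for r zs by (simp add: mech_output_def)
    have m0: "measure ?R {r \<in> space ?R. (\<lambda>t i. 0::real) \<in> S} \<ge> 0" by simp
    have "measure ?R {r \<in> space ?R. (\<lambda>t i. 0::real) \<in> S} \<le> exp \<epsilon> * measure ?R {r \<in> space ?R. (\<lambda>t i. 0::real) \<in> S}"
    proof -
      have e1: "exp \<epsilon> \<ge> 1" using assms(3) by simp
      have "1 * measure ?R {r \<in> space ?R. (\<lambda>t i. 0::real) \<in> S} \<le> exp \<epsilon> * measure ?R {r \<in> space ?R. (\<lambda>t i. 0::real) \<in> S}"
        by (rule mult_right_mono[OF e1 m0])
      then show ?thesis by simp
    qed
    then show "measure ?R {r \<in> space ?R. mech_output ?A r xs \<in> S}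
        \<le> exp \<epsilon> * measure ?R {r \<in> space ?R. mech_output ?A r ys \<in> S} + \<delta>"
      using assms(2) by (simp only: eq)
  qed
  show "accurate n T ?R ?A \<alpha>"
    unfolding accurate_def using assms(1) by auto
qed

lemma bern_meas: "measure (bernoulli_pmf (2/3)) {b. P b} = (if P True then 2/3 else 0) + (if P False then 1/3 else 0)"
proof -
  have "measure (bernoulli_pmf (2/3)) {b. P b} = sum (pmf (bernoulli_pmf (2/3))) {b. P b}"
    by (rule measure_measure_pmf_finite) simp
  also have "\<dots> = (\<Sum>b\<in>UNIV. if P b then pmf (bernoulli_pmf (2/3)) b else 0)"
    by (subst sum.inter_filter[symmetric]) auto
  also have "\<dots> = (if P True then 2/3 else 0) + (if P False then 1/3 else 0)"
    by (simp add: UNIV_bool)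
  finally show ?thesis .
qed

definition gb :: "bool \<Rightarrow> nat \<Rightarrow> real" where
  "gb b = (\<lambda>k. if b then 1 else 0)"

definition Amix :: "nat \<Rightarrow> (nat \<Rightarrow> real) \<Rightarrow> update list \<Rightarrow> nat \<Rightarrow> real" where
  "Amix n r p i = (if r 0 = 1 then real (deg_hist n {e. Some e \<in> set p} i) else 0)"

lemma mix_out: "mech_output (Amix n) (gb b) xs = (if b then (\<lambda>t i. real (deg_hist n (graph_at xs t) i)) else (\<lambda>t i. 0))"
  by (auto simp: mech_output_def Amix_def gb_def graph_at_def)

lemma mix_mech:
  assumes "2/3 \<le> \<delta>" "0 < \<epsilon>" "0 \<le> \<alpha>"
  shows "\<exists>(R::(nat \<Rightarrow> real) measure) A. continual_mechanism n T R A \<and> event_level_DP n T \<epsilon> \<delta> R A \<and> accurate n T R A \<alpha>"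
proof (intro exI conjI)
  let ?R = "measure_pmf (map_pmf gb (bernoulli_pmf (2/3)))"
  show "continual_mechanism n T ?R (Amix n)"
    unfolding continual_mechanism_def by (simp add: measure_pmf.prob_space_axioms measurable_pmf_measure1)
  show "event_level_DP n T \<epsilon> \<delta> ?R (Amix n)"
    unfolding event_level_DP_def
  proof (intro allI impI)
    fix xs ys :: "update list" and S :: "(nat \<Rightarrow> nat \<Rightarrow> real) set"
    have m: "measure ?R {r \<in> space ?R. mech_output (Amix n) r zs \<in> S} =
      (if (\<lambda>t i. real (deg_hist n (graph_at zs t) i)) \<in> S then 2/3 else 0) + (if (\<lambda>t i. 0::real) \<in> S then 1/3 else 0)" for zs
    proof -
      have "measure ?R {r \<in> space ?R. mech_output (Amix n) r zs \<in> S} = measure (bernoulli_pmf (2/3)) {b. mech_output (Amix n) (gb b) zs \<in> S}"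
        by (simp add: vimage_def)
      also have "\<dots> = (if (\<lambda>t i. real (deg_hist n (graph_at zs t) i)) \<in> S then 2/3 else 0) + (if (\<lambda>t i. 0::real) \<in> S then 1/3 else 0)"
        by (simp add: bern_meas mix_out)
      finally show ?thesis .
    qed
    have e1: "exp \<epsilon> \<ge> 1" using assms(2) by simp
    let ?y = "(if (\<lambda>t i. real (deg_hist n (graph_at ys t) i)) \<in> S then 2/3 else 0) + (if (\<lambda>t i. 0::real) \<in> S then 1/3 else (0::real))"
    have y0: "?y \<ge> 0" by simp
    have "?y \<le> exp \<epsilon> * ?y" using mult_right_mono[OF e1 y0] by simp
    moreover have "(if (\<lambda>t i. real (deg_hist n (graph_at xs t) i)) \<in> S then 2/3 else 0) + (if (\<lambda>t i. 0::real) \<in> S then 1/3 else (0::real)) \<le> 2/3 + ?y"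
      by auto
    ultimately show "measure ?R {r \<in> space ?R. mech_output (Amix n) r xs \<in> S}
        \<le> exp \<epsilon> * measure ?R {r \<in> space ?R. mech_output (Amix n) r ys \<in> S} + \<delta>"
      unfolding m using assms(1) by linarith
  qed
  show "accurate n T ?R (Amix n) \<alpha>"
    unfolding accurate_def
  proof (intro allI impI)
    fix xs assume "valid_stream n T xs"
    have "measure ?R {r \<in> space ?R. \<forall>t\<in>{1..T}. \<forall>i<n. \<bar>Amix n r (take t xs) i - real (deg_hist n (graph_at xs t) i)\<bar> \<le> \<alpha>}
        = measure (bernoulli_pmf (2/3)) {b. \<forall>t\<in>{1..T}. \<forall>i<n. \<bar>Amix n (gb b) (take t xs) i - real (deg_hist n (graph_at xs t) i)\<bar> \<le> \<alpha>}"
      by (simp add: vimage_def)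
    also have "\<dots> \<ge> 2/3"
      using assms(3) by (subst bern_meas) (simp add: Amix_def gb_def graph_at_def)
    finally show "2/3 \<le> measure ?R {r \<in> space ?R. \<forall>t\<in>{1..T}. \<forall>i<n. \<bar>Amix n r (take t xs) i - real (deg_hist n (graph_at xs t) i)\<bar> \<le> \<alpha>}" by simp
  qed
qed

lemma main_mech:
  fixes n T :: nat and \<epsilon> \<delta> :: real
  assumes n1: "n \<ge> 1" and T1: "T \<ge> 1" and \<epsilon>: "0 < \<epsilon>" "\<epsilon> < 1" and \<delta>: "0 < \<delta>" "\<delta> < 2/3"
  shows "\<exists>(R::(nat \<Rightarrow> real) measure) A. continual_mechanism n T R A \<and> event_level_DP n T \<epsilon> \<delta> R A \<and>
     accurate n T R A (6144 * (ln (real n + real T + 2))^3 * sqrt (real n * ln (1/\<delta>)) / \<epsilon>)"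
proof -
  define D where "D = real (card (Lev T))"
  define L where "L = ln (real n + real T + 2)"
  define Qb where "Qb = 128 * real n * D"
  define lg where "lg = ln (2/\<delta>)"
  define c where "c = \<epsilon> / sqrt (8 * Qb * lg)"
  define cu where "cu = real (card (Uset n T))"
  define m where "m = min \<delta> \<epsilon>"
  define Y where "Y = 8 * (cu + 1) / m"
  define K where "K = nat \<lceil>ln Y / c\<rceil>"
  define N where "N = 8 + K"
  define a where "a = ln (6 * cu + 1) / c"
  define s where "s = sqrt (real n * ln (1/\<delta>))"
  have D1: "D \<ge> 1" using card_Lev_ge1[OF T1] by (simp add: D_def)
  have DL: "D \<le> 4 * L" using card_Lev_L[OF T1 n1] by (simp add: D_def L_def)
  have L0: "L \<ge> 0" by (simp add: L_def)
  have s0: "s \<ge> 0" using \<delta> by (simp add: s_def)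
  have nD: "real n * D \<ge> 1" using n1 D1 by (metis mult_mono' of_nat_1 of_nat_le_iff mult_1 zero_le_one)
  have Qb: "Qb \<ge> 128" using nD by (simp add: Qb_def)
  have lg: "lg \<ge> 1/2"
  proof -
    have "ln 2 \<le> ln (2/\<delta>)" using \<delta> by (subst ln_le_cancel_iff) (auto simp: field_simps)
    then show ?thesis using ln2_half by (simp add: lg_def)
  qed
  have pos: "8 * Qb * lg \<ge> 512"
  proof -
    have "128 * (1/2) \<le> Qb * lg" by (rule mult_mono) (use Qb lg in auto)
    then show ?thesis by simp
  qed
  have c0: "c > 0" using \<epsilon> pos by (simp add: c_def)
  have c2: "c^2 = \<epsilon>^2 / (8 * Qb * lg)" using pos by (simp add: c_def power_divide)
  have c8: "8 * c \<le> 1"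
  proof -
    have "c^2 \<le> 1 / (8 * Qb * lg)" unfolding c2 using \<epsilon> pos
      by (intro divide_right_mono) (auto simp: power_le_one)
    also have "\<dots> \<le> 1/512" using pos by (intro divide_left_mono) auto
    also have "\<dots> \<le> (1/8)^2" by (simp add: power2_eq_square)
    finally have "c^2 \<le> (1/8)^2" .
    then have "c \<le> 1/8" by (rule power2_le_imp_le) simp
    then show ?thesis by simp
  qed
  have e1: "c^2 * Qb \<le> \<epsilon>/4"
  proof -
    have "c^2 * Qb = \<epsilon>^2 / (8 * lg)" unfolding c2 using Qb lg by (simp add: field_simps)
    also have "\<dots> \<le> \<epsilon>/4"
    proof -
      have "\<epsilon>^2 \<le> \<epsilon> * (2 * lg)" unfolding power2_eq_square using \<epsilon> lg by (intro mult_left_mono) auto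
      then show ?thesis using lg by (simp add: field_simps)
    qed
    finally show ?thesis .
  qed
  have e2: "8 * c^2 * Qb * lg \<le> \<epsilon>^2" unfolding c2 using pos by (simp add: field_simps)
  have m0: "m > 0" using \<epsilon> \<delta> by (simp add: m_def)
  have cu0: "cu \<ge> 0" by (simp add: cu_def)
  have Y0: "Y > 0" using m0 cu0 by (simp add: Y_def)
  have NK: "N - 8 + 1 = K + 1" by (simp add: N_def)
  have tl: "cu * (2 * exp (-c * real (N - 8 + 1))) \<le> min (\<delta>/2) (\<epsilon>/4)"
  proof -
    have "real K \<ge> ln Y / c" unfolding K_def by linarith
    then have "c * real (K + 1) \<ge> ln Y" using c0 by (simp add: field_simps)
    then have "exp (-c * real (K + 1)) \<le> exp (- ln Y)" by simp
    also have "\<dots> = 1 / Y" using Y0 by (simp add: exp_minus inverse_eq_divide)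
    finally have ex: "exp (-c * real (K + 1)) \<le> 1 / Y" .
    have "cu * (2 * exp (-c * real (N - 8 + 1))) \<le> cu * (2 * (1 / Y))"
      unfolding NK using ex cu0 by (intro mult_left_mono) auto
    also have "\<dots> = (cu / (cu + 1)) * (m / 4)" using m0 cu0 by (simp add: Y_def field_simps)
    also have "\<dots> \<le> 1 * (m / 4)" using m0 cu0 by (intro mult_right_mono) auto
    also have "\<dots> \<le> min (\<delta>/2) (\<epsilon>/4)" using \<delta> \<epsilon> by (simp add: m_def)
    finally show ?thesis .
  qed
  have DP: "event_level_DP n T \<epsilon> \<delta> (Rm n T c N) (Amain n T)"
    by (rule main_dp) (use c0 c8 e1 e2 tl \<delta> \<epsilon> in \<open>auto simp: N_def Qb_def D_def lg_def cu_def\<close>)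
  have a0: "a \<ge> 0" using cu0 c0 by (simp add: a_def)
  have tla: "cu * (2 * exp (-c * a)) \<le> 1/3"
  proof -
    have "-c * a = - ln (6 * cu + 1)" using c0 by (simp add: a_def)
    then have "exp (-c * a) = 1 / (6 * cu + 1)" using cu0 by (simp add: exp_minus inverse_eq_divide)
    then have "cu * (2 * exp (-c * a)) = 2 * cu / (6 * cu + 1)" by simp
    also have "\<dots> \<le> 1/3" using cu0 by (simp add: field_simps)
    finally show ?thesis .
  qed
  have bound: "D * a \<le> 6144 * L^3 * s / \<epsilon>"
  proof -
    have sq: "sqrt (8 * Qb * lg) = 32 * sqrt D * sqrt (real n * lg)"
    proof -
      have "8 * Qb * lg = 32^2 * (D * (real n * lg))" by (simp add: Qb_def)
      then have "sqrt (8 * Qb * lg) = sqrt (32^2) * (sqrt D * sqrt (real n * lg))" by (simp only: real_sqrt_mult)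
      also have "sqrt ((32::real)^2) = 32" by simp
      finally show ?thesis by simp
    qed
    have sD: "sqrt D \<le> D"
    proof -
      have s1: "sqrt D \<ge> 1" using D1 by simp
      have "sqrt D * 1 \<le> sqrt D * sqrt D" using s1 by (intro mult_left_mono) auto
      also have "sqrt D * sqrt D = D" using D1 by simp
      finally show ?thesis by simp
    qed
    have slg: "sqrt (real n * lg) \<le> 2 * s"
    proof -
      have "real n * lg \<le> real n * (4 * ln (1/\<delta>))" using lg_bound[OF \<delta>] by (intro mult_left_mono) (auto simp: lg_def)
      then have "sqrt (real n * lg) \<le> sqrt (4 * (real n * ln (1/\<delta>)))" by (simp add: algebra_simps)
      also have "\<dots> = 2 * s" by (simp add: real_sqrt_mult s_def)
      finally show ?thesis .
    qed
    have lnU: "ln (6 * cu + 1) \<le> 6 * L" using ln_Uset[OF T1 n1] by (simp add: cu_def L_def)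
    have lnU0: "ln (6 * cu + 1) \<ge> 0" using cu0 by simp
    have "D * a = D * ln (6 * cu + 1) * sqrt (8 * Qb * lg) / \<epsilon>"
      using pos \<epsilon> by (simp add: a_def c_def)
    also have "\<dots> = 32 * (D * ln (6 * cu + 1) * sqrt D * sqrt (real n * lg)) / \<epsilon>" by (simp add: sq)
    also have "D * ln (6 * cu + 1) * sqrt D * sqrt (real n * lg) \<le> (4 * L) * (6 * L) * (4 * L) * (2 * s)"
      using D1 L0 s0 lnU0 lg by (intro mult_mono DL lnU slg order_trans[OF sD DL]) auto
    finally have "D * a \<le> 32 * ((4 * L) * (6 * L) * (4 * L) * (2 * s)) / \<epsilon>" using \<epsilon> by (simp add: divide_right_mono)
    also have "\<dots> = 6144 * L^3 * s / \<epsilon>" by (simp add: power3_eq_cube)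
    finally show ?thesis .
  qed
  have ACC: "accurate n T (Rm n T c N) (Amain n T) (6144 * (ln (real n + real T + 2))^3 * sqrt (real n * ln (1/\<delta>)) / \<epsilon>)"
    by (rule main_acc[OF c0 a0]) (use tla bound in \<open>simp_all add: cu_def D_def L_def s_def\<close>)
  show ?thesis using DP ACC main_cm by blast
qed

lemma main_all:
  fixes n T :: nat and \<epsilon> \<delta> :: real
  assumes h: "0 < \<epsilon> \<and> \<epsilon> < 1 \<and> 0 < \<delta> \<and> \<delta> < 1"
  shows "\<exists>(R::(nat \<Rightarrow> real) measure) A.
        continual_mechanism n T R A \<and> event_level_DP n T \<epsilon> \<delta> R A \<and>
        accurate n T R A ((6144::real) * (ln (real n + real T + 2)) ^ (3::nat) * sqrt (real n * ln (1 / \<delta>)) / \<epsilon>)"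
proof (cases "n = 0 \<or> T = 0")
  case True
  then show ?thesis using h by (intro triv_mech) auto
next
  case nT: False
  show ?thesis
  proof (cases "2/3 \<le> \<delta>")
    case True
    have "0 \<le> 6144 * (ln (real n + real T + 2)) ^ 3 * sqrt (real n * ln (1 / \<delta>)) / \<epsilon>"
      using h by (intro divide_nonneg_pos mult_nonneg_nonneg) auto
    then show ?thesis using h True by (intro mix_mech) auto
  next
    case False
    then show ?thesis using h nT by (intro main_mech) auto
  qed
qed

theorem mainTheorem7:
  shows "\<exists>(C::real) (k::nat). \<forall>(n::nat) (T::nat) (\<epsilon>::real) (\<delta>::real).
     0 < \<epsilon> \<and> \<epsilon> < 1 \<and> 0 < \<delta> \<and> \<delta> < 1 \<longrightarrow>
     (\<exists>(R::(nat \<Rightarrow> real) measure) A.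
        continual_mechanism n T R A \<and> event_level_DP n T \<epsilon> \<delta> R A \<and>
        accurate n T R A
          (C * (ln (real n + real T + 2)) ^ k * sqrt (real n * ln (1 / \<delta>)) / \<epsilon>))"
  using main_all by blast

end
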